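(* Let $K,L\in\mathcal{K}_+^2$ be convex bodies in $\mathbb{R}^2$. Then $$\frac12\int_{\partial L}\frac{1}{\kappa_{L,K}}\,d\mu_{\partial L;K}-V(L)\geq\lambda_2(-L_K)\Big(\frac{V(K,L)^2}{V(K)}-V(L)\Big).$$ When $K=B$ is the unit disc, this reduces to $$\frac12\int_{\partial L}\frac1{\kappa_L}\,d\mu_{\partial L}-V(L)\geq4\Big(\frac{|\partial L|^2}{4\pi}-V(L)\Big).$$
   Context: Here $n=2$. $\mathcal{K}_+^2$ is the class of convex bodies in $\mathbb{R}^2$ containing the origin in their interior with $C^2$ boundary and positive curvature, and $h_K$ is the support function on $\mathbb{S}^1$. $V(L)$ is area, $V(K,L)$ is the mixed area, and $|\partial L|$ is the perimeter. Curvatures and measures on $\partial L$: - $\nu:\partial L\to\mathbb{S}^1$ is the Gauss map of $L$, $\kappa_L$ the curvature of $\partial L$, and $d\mu_{\partial L}$ the arc-length measure. - For $X\in\partial L$, $\kappa_{L,K}(X)=\kappa_L(X)/\kappa_K(Y)$, where $Y\in\partial K$ is the point of $\partial K$ with outer normal $\nu(X)$. Equivalently, $\kappa_{L,K}$ is the eigenvalue of the anisotropic Weingarten map $d\nu_\gamma$, with $\nu_\gamma=h_K(\nu)\nu+\nabla h_K(\nu)$. - $d\mu_{\partial L;K}=h_K(\nu)\,d\mu_{\partial L}$. Notation on $\mathbb{S}^1$: - $D^2h=h''+h$ and $dV_K=\frac12h_KD^2h_K\,d\mu$. - $L_Kz=(D^2h_K)^{-1}D^2(zh_K)-z$ and $\ell_v^K(x)=\langle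 x,v\rangle/h_K(x)$. - $\lambda_2(-L_K)$ is the infimum of $\int z(-L_Kz)dV_K/\int z^2dV_K$ over nonzero $z\in C^2(\mathbb{S}^1)$ with $\int z\,dV_K=0$ and $\int z\ell_v^KdV_K=0$ for all $v\in\mathbb{R}^2$. *)

theory Defs
  imports "HOL-Analysis.Analysis"
begin

definition dir :: "real \<Rightarrow> real^2" where
  "dir t = vector [cos t, sin t]"

definition supp :: "(real^2) set \<Rightarrow> real \<Rightarrow> real" where
  "supp K t = Sup ((\<lambda>x. x \<bullet> dir t) ` K)"

definition C2_circle :: "(real \<Rightarrow> real) \<Rightarrow> bool" where
  "C2_circle f \<longleftrightarrow> (\<forall>t. f (t + 2*pi) = f t) \<and> (\<forall>t. f differentiable at t)
     \<and> (\<forall>t. deriv f differentiable at t) \<and> continuous_on UNIV (deriv (deriv f))"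

definition D2 :: "(real \<Rightarrow> real) \<Rightarrow> real \<Rightarrow> real" where
  "D2 f t = deriv (deriv f) t + f t"

text \<open>The class K_+^2: convex bodies containing the origin in the interior, with C^2
  boundary of positive curvature (equivalently: C^2 support function with h''+h > 0).\<close>
definition Kplus2 :: "(real^2) set \<Rightarrow> bool" where
  "Kplus2 K \<longleftrightarrow> compact K \<and> convex K \<and> 0 \<in> interior K
     \<and> C2_circle (supp K) \<and> (\<forall>t. D2 (supp K) t > 0)"

definition area :: "(real^2) set \<Rightarrow> real" where
  "area K = measure lebesgue K"

text \<open>Mixed area, via V(K+L) = V(K) + 2 V(K,L) + V(L).\<close>
definition mixed_area :: "(real^2) set \<Rightarrow> (real^2) set \<Rightarrow> real" where
  "mixed_area K L = (area {x + y | x y. x \<in> K \<and> y \<in> L} - area K - area L) / 2"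

text \<open>Integration over the boundary of L with respect to arc length, of a quantity
  expressed through the outer normal angle t of the boundary point (Gauss map
  parametrisation: d mu = (h_L''+h_L) dt).\<close>
definition bd_integral :: "(real^2) set \<Rightarrow> (real \<Rightarrow> real) \<Rightarrow> real" where
  "bd_integral L g = integral {0..2*pi} (\<lambda>t. g t * D2 (supp L) t)"

text \<open>Curvature of the boundary of L at the point with outer normal dir t.\<close>
definition curv :: "(real^2) set \<Rightarrow> real \<Rightarrow> real" where
  "curv L t = 1 / D2 (supp L) t"

definition rel_curv :: "(real^2) set \<Rightarrow> (real^2) set \<Rightarrow> real \<Rightarrow> real" where
  "rel_curv L K t = curv L t / curv K t"

definition perimeter :: "(real^2) set \<Rightarrow> real" where
  "perimeter L = bd_integral L (\<lambda>_. 1)"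

definition dV_integral :: "(real^2) set \<Rightarrow> (real \<Rightarrow> real) \<Rightarrow> real" where
  "dV_integral K g = integral {0..2*pi} (\<lambda>t. g t * ((1/2) * supp K t * D2 (supp K) t))"

definition L_op :: "(real^2) set \<Rightarrow> (real \<Rightarrow> real) \<Rightarrow> real \<Rightarrow> real" where
  "L_op K z t = D2 (\<lambda>s. z s * supp K s) t / D2 (supp K) t - z t"

definition ell :: "(real^2) set \<Rightarrow> real^2 \<Rightarrow> real \<Rightarrow> real" where
  "ell K v t = (dir t \<bullet> v) / supp K t"

definition lambda2 :: "(real^2) set \<Rightarrow> real" where
  "lambda2 K = Inf { dV_integral K (\<lambda>t. z t * (- L_op K z t)) / dV_integral K (\<lambda>t. (z t)^2)
      | z. C2_circle z \<and> (\<exists>t. z t \<noteq> 0) \<and> dV_integral K z = 0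
           \<and> (\<forall>v. dV_integral K (\<lambda>t. z t * ell K v t) = 0) }"

end

theory Submission
  imports Defs
begin

definition C2w :: "(real \<Rightarrow> real) \<Rightarrow> (real \<Rightarrow> real) \<Rightarrow> (real \<Rightarrow> real) \<Rightarrow> bool" where
 "C2w f f1 f2 \<longleftrightarrow> (\<forall>t. f (t + 2*pi) = f t) \<and> (\<forall>t. (f has_real_derivative f1 t) (at t))
    \<and> (\<forall>t. (f1 has_real_derivative f2 t) (at t)) \<and> continuous_on UNIV f2"

lemma C2wD:
  assumes "C2w f f1 f2"
  shows "f (t + 2*pi) = f t" "(f has_real_derivative f1 t) (at t)" "(f1 has_real_derivative f2 t) (at t)"
    "continuous_on UNIV f2"
  using assms unfolding C2w_def by auto

lemma C2w_deriv: "C2w f f1 f2 \<Longrightarrow> deriv f = f1"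
  by (rule ext) (meson C2wD(2) DERIV_imp_deriv)

lemma C2w_deriv2: assumes "C2w f f1 f2" shows "deriv (deriv f) = f2"
  unfolding C2w_deriv[OF assms] by (rule ext, meson assms C2wD(3) DERIV_imp_deriv)

lemma C2w_C2: assumes "C2w f f1 f2" shows "C2_circle f"
proof -
  have "deriv f1 = f2" using C2w_deriv2[OF assms] C2w_deriv[OF assms] by simp
  then show ?thesis
  unfolding C2_circle_def C2w_deriv[OF assms]
  using C2wD[OF assms] real_differentiable_def by auto
qed

lemma C2_C2w: "C2_circle f \<Longrightarrow> C2w f (deriv f) (deriv (deriv f))"
  unfolding C2_circle_def C2w_def
  by (auto simp: DERIV_deriv_iff_real_differentiable)

lemma C2w_D2: assumes "C2w f f1 f2" shows "D2 f t = f2 t + f t"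
  by (simp add: D2_def C2w_deriv2[OF assms])

lemma C2w_cont0: "C2w f f1 f2 \<Longrightarrow> continuous_on UNIV f"
  by (meson C2wD(2) DERIV_isCont continuous_at_imp_continuous_on)

lemma C2w_cont1: "C2w f f1 f2 \<Longrightarrow> continuous_on UNIV f1"
  by (meson C2wD(3) DERIV_isCont continuous_at_imp_continuous_on)

lemma C2w_cont2: "C2w f f1 f2 \<Longrightarrow> continuous_on UNIV f2"
  by (meson C2wD(4))

lemma per_deriv:
  assumes "\<And>t. f (t + 2*pi) = f t" "\<And>t. (f has_real_derivative f1 t) (at t)"
  shows "f1 (t + 2*pi) = f1 t"
proof -
  have "((\<lambda>s. f (s + 2*pi)) has_real_derivative f1 (t + 2*pi)) (at t)"
    using assms(2)[of "t + 2*pi"] DERIV_shift by blast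
  moreover have "(\<lambda>s. f (s + 2*pi)) = f" using assms(1) by auto
  ultimately show ?thesis using assms(2)[of t] DERIV_unique by metis
qed

lemma C2w_per1: "C2w f f1 f2 \<Longrightarrow> f1 (t + 2*pi) = f1 t"
  using per_deriv C2wD by metis

lemma C2w_per2: "C2w f f1 f2 \<Longrightarrow> f2 (t + 2*pi) = f2 t"
  using per_deriv[of f1 f2] C2wD C2w_per1 by metis

lemma C2w_add: "C2w f f1 f2 \<Longrightarrow> C2w g g1 g2 \<Longrightarrow>
   C2w (\<lambda>t. f t + g t) (\<lambda>t. f1 t + g1 t) (\<lambda>t. f2 t + g2 t)"
  unfolding C2w_def by (auto intro!: derivative_eq_intros continuous_intros)

lemma C2w_diff: "C2w f f1 f2 \<Longrightarrow> C2w g g1 g2 \<Longrightarrow>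
   C2w (\<lambda>t. f t - g t) (\<lambda>t. f1 t - g1 t) (\<lambda>t. f2 t - g2 t)"
  unfolding C2w_def by (auto intro!: derivative_eq_intros continuous_intros)

lemma C2w_cmult: "C2w f f1 f2 \<Longrightarrow> C2w (\<lambda>t. c * f t) (\<lambda>t. c * f1 t) (\<lambda>t. c * f2 t)"
  unfolding C2w_def by (auto intro!: derivative_eq_intros continuous_intros)

lemma C2w_const: "C2w (\<lambda>t. c) (\<lambda>t. 0) (\<lambda>t. 0)"
  unfolding C2w_def by (auto intro!: derivative_eq_intros continuous_intros)

lemma C2w_cos: "C2w cos (\<lambda>t. - sin t) (\<lambda>t. - cos t)"
  unfolding C2w_def by (auto intro!: derivative_eq_intros continuous_intros)

lemma C2w_sin: "C2w sin (\<lambda>t. cos t) (\<lambda>t. - sin t)"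
  unfolding C2w_def by (auto intro!: derivative_eq_intros continuous_intros)

lemma C2w_mult: "C2w f f1 f2 \<Longrightarrow> C2w g g1 g2 \<Longrightarrow>
   C2w (\<lambda>t. f t * g t) (\<lambda>t. f1 t * g t + f t * g1 t) (\<lambda>t. f2 t * g t + 2 * f1 t * g1 t + f t * g2 t)"
  apply (frule C2w_cont0, frule C2w_cont1, frule C2w_cont2)
  apply (frule C2w_cont0[of g], frule C2w_cont1[of g], frule C2w_cont2[of g])
  unfolding C2w_def
  by (auto intro!: derivative_eq_intros continuous_intros simp: algebra_simps)

lemma C2w_inv: assumes "C2w f f1 f2" "\<And>t. f t \<noteq> 0"
  shows "C2w (\<lambda>t. 1 / f t) (\<lambda>t. - f1 t / (f t)^2) (\<lambda>t. (2 * (f1 t)^2 - f t * f2 t) / (f t)^3)"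
proof -
  have c: "continuous_on UNIV f" "continuous_on UNIV f1" "continuous_on UNIV f2"
    using assms C2w_cont0 C2w_cont1 C2w_cont2 by blast+
  show ?thesis
  using assms c unfolding C2w_def
  apply (auto intro!: derivative_eq_intros continuous_intros)
  apply (auto simp: field_simps eval_nat_numeral)
  done
qed

abbreviation Ip :: "(real \<Rightarrow> real) \<Rightarrow> real" where
  "Ip f \<equiv> integral {0..2*pi} f"

lemma int_cont: "continuous_on UNIV f \<Longrightarrow> (f::real\<Rightarrow>real) integrable_on {a..b}"
  by (meson continuous_on_subset integrable_continuous_interval subset_UNIV)

lemma ftc_int:
  fixes F f :: "real \<Rightarrow> real"
  assumes "a \<le> b" "\<And>t. t \<in> {a..b} \<Longrightarrow> (F has_real_derivative f t) (at t)"
  shows "(f has_integral (F b - F a)) {a..b}"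
  apply (rule fundamental_theorem_of_calculus[OF assms(1)])
  using assms(2) by (simp add: has_real_derivative_iff_has_vector_derivative[symmetric]
       has_field_derivative_at_within)

lemma ftc_int':
  fixes F f :: "real \<Rightarrow> real"
  assumes "a \<le> b" "\<And>t. t \<in> {a..b} \<Longrightarrow> (F has_real_derivative f t) (at t)"
  shows "integral {a..b} f = F b - F a"
  using ftc_int[OF assms] by (rule integral_unique)

lemma parts:
  assumes "C2w f f1 f2" "C2w g g1 g2"
  shows "Ip (\<lambda>t. f t * g2 t) = - Ip (\<lambda>t. f1 t * g1 t)"
proof -
  have d: "((\<lambda>t. f t * g1 t) has_real_derivative (f1 t * g1 t + f t * g2 t)) (at t)" for t
    using assms by (auto intro!: derivative_eq_intros dest: C2wD)
  have "Ip (\<lambda>t. f1 t * g1 t + f t * g2 t) = f (0 + 2*pi) * g1 (0+2*pi) - f 0 * g1 0"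
    using ftc_int'[OF _ d, of 0 "2*pi"] by simp
  also have "\<dots> = 0" using C2wD(1)[OF assms(1), of 0] C2w_per1[OF assms(2), of 0] by simp
  finally have "Ip (\<lambda>t. f1 t * g1 t + f t * g2 t) = 0" .
  moreover have "Ip (\<lambda>t. f1 t * g1 t + f t * g2 t) = Ip (\<lambda>t. f1 t * g1 t) + Ip (\<lambda>t. f t * g2 t)"
    apply (rule integral_add)
    using assms by (auto intro!: int_cont continuous_intros dest: C2w_cont0 C2w_cont1 C2w_cont2)
  ultimately show ?thesis by simp
qed

lemma parts_sym:
  assumes "C2w f f1 f2" "C2w g g1 g2"
  shows "Ip (\<lambda>t. f t * g2 t) = Ip (\<lambda>t. f2 t * g t)"
proof -
  have "Ip (\<lambda>t. f2 t * g t) = Ip (\<lambda>t. g t * f2 t)" by (simp add: mult.commute)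
  also have "\<dots> = - Ip (\<lambda>t. g1 t * f1 t)" by (rule parts[OF assms(2,1)])
  also have "\<dots> = - Ip (\<lambda>t. f1 t * g1 t)" by (simp add: mult.commute)
  finally show ?thesis using parts[OF assms] by simp
qed

definition Bf :: "(real \<Rightarrow> real) \<Rightarrow> (real \<Rightarrow> real) \<Rightarrow> real" where
  "Bf f g = Ip (\<lambda>t. f t * D2 g t)"

lemma Bf_sym:
  assumes "C2w f f1 f2" "C2w g g1 g2"
  shows "Bf f g = Bf g f"
proof -
  have i: "(\<lambda>t. a t * b t) integrable_on {0..2*pi}" if "continuous_on UNIV a" "continuous_on UNIV b" for a b :: "real \<Rightarrow> real"
    using that by (auto intro!: int_cont continuous_intros)
  have c: "continuous_on UNIV f" "continuous_on UNIV f2" "continuous_on UNIV g" "continuous_on UNIV g2"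
    using assms C2w_cont0 C2w_cont2 by blast+
  have "Bf f g = Ip (\<lambda>t. f t * g2 t) + Ip (\<lambda>t. f t * g t)"
    unfolding Bf_def C2w_D2[OF assms(2)] distrib_left
    by (rule integral_add; rule i; simp add: c)
  moreover have "Bf g f = Ip (\<lambda>t. g t * f2 t) + Ip (\<lambda>t. g t * f t)"
    unfolding Bf_def C2w_D2[OF assms(1)] distrib_left
    by (rule integral_add; rule i; simp add: c)
  ultimately show ?thesis using parts_sym[OF assms] parts_sym[OF assms(2,1)]
    by (simp add: mult.commute)
qed

lemma Bf_self:
  assumes "C2w f f1 f2"
  shows "Bf f f = Ip (\<lambda>t. (f t)^2) - Ip (\<lambda>t. (f1 t)^2)"
proof -
  have c: "continuous_on UNIV f" "continuous_on UNIV f1" "continuous_on UNIV f2"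
    using assms C2w_cont0 C2w_cont1 C2w_cont2 by blast+
  have "Bf f f = Ip (\<lambda>t. f t * f2 t) + Ip (\<lambda>t. f t * f t)"
    unfolding Bf_def C2w_D2[OF assms] distrib_left
    by (rule integral_add; auto intro!: int_cont continuous_intros simp: c)
  then show ?thesis using parts[OF assms assms] by (simp add: power2_eq_square)
qed

lemma dirichlet:
  fixes u u1 :: "real \<Rightarrow> real"
  assumes ab: "a < b" and du: "\<And>t. (u has_real_derivative u1 t) (at t)" and cu1: "continuous_on UNIV u1"
    and ua: "u a = 0" and ub: "u b = 0" and c: "0 < c" "c * (b - a) < pi"
  shows "c^2 * integral {a..b} (\<lambda>t. (u t)^2) \<le> integral {a..b} (\<lambda>t. (u1 t)^2)"
proof -
  define d where "d = (pi - c*(b-a))/2"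
  define w where "w t = sin (c*(t-a) + d)" for t
  define w1 where "w1 t = c * cos (c*(t-a)+d)" for t
  have wpos: "w t > 0" if "t \<in> {a..b}" for t
  proof -
    have "0 \<le> c*(t-a)" using that c by auto
    then have "0 < c*(t-a) + d" using c unfolding d_def by argo
    moreover have "c*(t-a) \<le> c*(b-a)" using that c by (auto intro!: mult_left_mono)
    then have "c*(t-a) + d < pi" using c unfolding d_def by argo
    ultimately show ?thesis unfolding w_def by (rule sin_gt_zero)
  qed
  have cu: "continuous_on UNIV u"
    by (meson DERIV_isCont continuous_at_imp_continuous_on du)
  define G where "G t = (u t)^2 * w1 t / w t" for t
  define E where "E t = (u1 t)^2 - c^2 * (u t)^2 - (u1 t - u t * w1 t / w t)^2" for t
  have dG: "(G has_real_derivative E t) (at t)" if "t \<in> {a..b}" for t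
  proof -
    have wt: "w t \<noteq> 0" using wpos[OF that] by simp
    have dw: "(w has_real_derivative w1 s) (at s)" for s
      unfolding w_def[abs_def] w1_def by (auto intro!: derivative_eq_intros)
    have dw1: "(w1 has_real_derivative (- (c*c*w s))) (at s)" for s
      unfolding w_def w1_def[abs_def] by (auto intro!: derivative_eq_intros simp: power2_eq_square)
    have "(G has_real_derivative
        ((2 * u t * u1 t * w1 t + (u t)^2 * (- (c*c*w t))) * w t - (u t)^2 * w1 t * w1 t) / (w t * w t)) (at t)"
      unfolding G_def[abs_def] using wt
      by (auto intro!: derivative_eq_intros du dw dw1 simp: power2_eq_square)
    moreover have "((2 * u t * u1 t * w1 t + (u t)^2 * (- (c*c*w t))) * w t - (u t)^2 * w1 t * w1 t) / (w t * w t) = E t"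
      unfolding E_def using wt
      by (simp add: field_simps power2_eq_square)
    ultimately show ?thesis by simp
  qed
  have hE: "(E has_integral (G b - G a)) {a..b}"
    using ftc_int[of a b G E] dG ab by simp
  have G0: "G b - G a = 0" by (simp add: G_def ua ub)
  define S where "S t = (u1 t - u t * w1 t / w t)^2" for t
  have cS: "continuous_on {a..b} S"
    unfolding S_def w_def w1_def
    apply (auto intro!: continuous_intros continuous_on_subset[OF cu] continuous_on_subset[OF cu1])
    using wpos[unfolded w_def] by (metis atLeastAtMost_iff less_irrefl)
  have iS: "S integrable_on {a..b}" by (rule integrable_continuous_interval[OF cS])
  have iu: "(\<lambda>t. (u t)^2) integrable_on {a..b}" "(\<lambda>t. (u1 t)^2) integrable_on {a..b}"
    using cu cu1 by (auto intro!: int_cont continuous_intros)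
  have iu2: "(\<lambda>t. c^2 * (u t)^2) integrable_on {a..b}"
    using cu by (auto intro!: int_cont continuous_intros)
  have "integral {a..b} (\<lambda>t. (u1 t)^2 - c^2 * (u t)^2) = integral {a..b} (\<lambda>t. (u1 t)^2) - integral {a..b} (\<lambda>t. c^2 * (u t)^2)"
    by (rule integral_diff[OF iu(2) iu2])
  then have "integral {a..b} (\<lambda>t. (u1 t)^2) - c^2 * integral {a..b} (\<lambda>t. (u t)^2)
      = integral {a..b} (\<lambda>t. (u1 t)^2 - c^2 * (u t)^2)"
    by simp
  also have "\<dots> = integral {a..b} (\<lambda>t. S t + E t)"
    by (simp add: S_def E_def)
  also have "\<dots> = integral {a..b} S + integral {a..b} E"
    using iS hE by (intro integral_add) auto
  finally have eq: "integral {a..b} (\<lambda>t. (u1 t)^2) - c^2 * integral {a..b} (\<lambda>t. (u t)^2)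
     = integral {a..b} S + integral {a..b} E" .
  have "integral {a..b} E = 0" using hE G0 by (simp add: integral_unique)
  moreover have "integral {a..b} S \<ge> 0"
    using iS by (rule integral_nonneg) (simp add: S_def)
  ultimately show ?thesis using eq by linarith
qed

lemma dirichlet_lim:
  fixes u u1 :: "real \<Rightarrow> real"
  assumes ab: "a < b" and du: "\<And>t. (u has_real_derivative u1 t) (at t)" and cu1: "continuous_on UNIV u1"
    and ua: "u a = 0" and ub: "u b = 0"
  shows "(pi/(b-a))^2 * integral {a..b} (\<lambda>t. (u t)^2) \<le> integral {a..b} (\<lambda>t. (u1 t)^2)"
proof (rule ccontr)
  define X where "X = integral {a..b} (\<lambda>t. (u t)^2)"
  define Y where "Y = integral {a..b} (\<lambda>t. (u1 t)^2)"
  define M where "M = pi/(b-a)"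
  have M0: "M > 0" using ab by (simp add: M_def)
  have cu: "continuous_on UNIV u"
    by (meson DERIV_isCont continuous_at_imp_continuous_on du)
  have X0: "X \<ge> 0" unfolding X_def
    by (rule integral_nonneg) (use cu in \<open>auto intro!: int_cont continuous_intros\<close>)
  have Y0: "Y \<ge> 0" unfolding Y_def
    by (rule integral_nonneg) (use cu1 in \<open>auto intro!: int_cont continuous_intros\<close>)
  have key: "c^2 * X \<le> Y" if "0 < c" "c < M" for c
  proof -
    have "c * (b - a) < pi" using that ab by (simp add: M_def field_simps)
    then show ?thesis unfolding X_def Y_def using dirichlet[OF ab du cu1 ua ub \<open>0 < c\<close>] by simp
  qed
  assume "\<not> ?thesis"
  then have lt: "Y < M^2 * X" by (simp add: X_def Y_def M_def)
  then have Xp: "X > 0" using X0 Y0 by (cases "X = 0") auto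
  define q where "q = Y / X"
  have q0: "q \<ge> 0" and qM: "q < M^2" using lt Xp Y0 by (auto simp: q_def field_simps)
  have "sqrt q < sqrt (M^2)" using qM by (rule real_sqrt_less_mono)
  then have sq: "sqrt q < M" using M0 by simp
  define c where "c = (sqrt q + M) / 2"
  have sq0: "0 \<le> sqrt q" using q0 by simp
  have c0: "0 < c" "c < M" "sqrt q < c" using sq M0 sq0 unfolding c_def by argo+
  have "q < c^2"
  proof -
    have "sqrt q ^ 2 < c ^ 2" using c0 q0 by (intro power_strict_mono) auto
    then show ?thesis using q0 by simp
  qed
  then have "Y < c^2 * X" using Xp by (simp add: q_def field_simps)
  with key[OF c0(1,2)] show False by simp
qed

lemma per_shift:
  fixes F :: "real \<Rightarrow> real"
  assumes cF: "continuous_on UNIV F" and pF: "\<And>t. F (t + 2*pi) = F t" and a: "0 \<le> a" "a \<le> 2*pi"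
  shows "integral {a..a+2*pi} F = Ip F"
proof -
  have "integral {a..a+2*pi} F = integral {a..2*pi} F + integral {2*pi..a+2*pi} F"
    using a cF by (intro Henstock_Kurzweil_Integration.integral_combine[symmetric]) (auto intro: int_cont)
  also have "integral {2*pi..a+2*pi} F = integral {2*pi-2*pi..a+2*pi-2*pi} (\<lambda>t. F (t + 2*pi))"
    by (rule integral_shift_real_ivl[symmetric])
  also have "\<dots> = integral {0..a} F" using pF by simp
  also have "integral {a..2*pi} F + integral {0..a} F = Ip F"
  proof -
    have "integral {0..a} F + integral {a..2*pi} F = Ip F"
      by (rule Henstock_Kurzweil_Integration.integral_combine) (use a cF in \<open>auto intro: int_cont\<close>)
    then show ?thesis by linarith
  qed
  finally show ?thesis .
qed

lemma Ip_const: "Ip (\<lambda>t. c) = 2*pi*c"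
  by simp

lemma Ip_cos: "Ip cos = 0"
  using ftc_int'[of 0 "2*pi" sin cos] by (auto intro!: derivative_eq_intros)

lemma Ip_sin: "Ip sin = 0"
  using ftc_int'[of 0 "2*pi" "\<lambda>t. - cos t" sin] by (auto intro!: derivative_eq_intros)

lemma sin4pi: "sin (2 * (2 * pi)) = 0" by (simp add: sin_double)
lemma cos4pi: "cos (2 * (2 * pi)) = 1" by (simp add: cos_double)

lemma DERIV_eqI: "(f has_real_derivative a) F \<Longrightarrow> a = b \<Longrightarrow> (f has_real_derivative b) F"
  by simp

lemma Ip_cos2: "Ip (\<lambda>t. (cos t)^2) = pi"
proof -
  have d: "((\<lambda>t. t/2 + sin (2*t)/4) has_real_derivative (cos t)^2) (at t)" for t
  proof -
    have "((\<lambda>t. t/2 + sin (2*t)/4) has_real_derivative (1/2 + cos (2*t) * 2 / 4)) (at t)"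
      by (auto intro!: derivative_eq_intros)
    moreover have "1/2 + cos (2*t) * 2 / 4 = (cos t)^2" unfolding cos_double_cos by (simp add: field_simps)
    ultimately show ?thesis by simp
  qed
  have "Ip (\<lambda>t. (cos t)^2) = (2*pi/2 + sin (2*(2*pi))/4) - (0/2 + sin (2*0)/4)"
    by (rule ftc_int'[of 0 "2*pi" "\<lambda>t. t/2 + sin (2*t)/4"]) (auto intro: d)
  then show ?thesis by (simp add: sin4pi)
qed

lemma Ip_sin2: "Ip (\<lambda>t. (sin t)^2) = pi"
proof -
  have d: "((\<lambda>t. t/2 - sin (2*t)/4) has_real_derivative (sin t)^2) (at t)" for t
  proof -
    have "((\<lambda>t. t/2 - sin (2*t)/4) has_real_derivative (1/2 - cos (2*t) * 2 / 4)) (at t)"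
      by (auto intro!: derivative_eq_intros)
    moreover have "1/2 - cos (2*t) * 2 / 4 = (sin t)^2" unfolding cos_double_sin by (simp add: field_simps)
    ultimately show ?thesis by simp
  qed
  have "Ip (\<lambda>t. (sin t)^2) = (2*pi/2 - sin (2*(2*pi))/4) - (0/2 - sin (2*0)/4)"
    by (rule ftc_int'[of 0 "2*pi" "\<lambda>t. t/2 - sin (2*t)/4"]) (auto intro: d)
  then show ?thesis by (simp add: sin4pi)
qed

lemma Ip_sincos: "Ip (\<lambda>t. sin t * cos t) = 0"
proof -
  have "Ip (\<lambda>t. sin t * cos t) = (sin (2*pi))^2/2 - (sin 0)^2/2"
    apply (rule ftc_int'[of 0 "2*pi" "\<lambda>t. (sin t)^2/2"])
     apply simp
    apply (auto intro!: derivative_eq_intros simp: power2_eq_square)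
    done
  then show ?thesis by simp
qed

lemma Ip_sq_diff:
  assumes "continuous_on UNIV A" "continuous_on UNIV B"
  shows "Ip (\<lambda>t. (A t - B t)^2) = Ip (\<lambda>t. (A t)^2) - 2 * Ip (\<lambda>t. A t * B t) + Ip (\<lambda>t. (B t)^2)"
proof -
  have i: "continuous_on UNIV F \<Longrightarrow> F integrable_on {0..2*pi}" for F :: "real \<Rightarrow> real" by (rule int_cont)
  have "Ip (\<lambda>t. (A t - B t)^2) = Ip (\<lambda>t. ((A t)^2 - 2 * (A t * B t)) + (B t)^2)"
    by (simp add: power2_eq_square algebra_simps)
  also have "\<dots> = Ip (\<lambda>t. (A t)^2 - 2 * (A t * B t)) + Ip (\<lambda>t. (B t)^2)"
    using assms by (intro integral_add i continuous_intros)
  also have "Ip (\<lambda>t. (A t)^2 - 2 * (A t * B t)) = Ip (\<lambda>t. (A t)^2) - Ip (\<lambda>t. 2 * (A t * B t))"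
    using assms by (intro integral_diff i continuous_intros)
  finally show ?thesis by simp
qed

lemma wirt1:
  assumes f: "C2w f f1 f2" and f0: "Ip f = 0"
  shows "Ip (\<lambda>t. (f t)^2) \<le> Ip (\<lambda>t. (f1 t)^2)"
proof -
  have cf: "continuous_on UNIV f" "continuous_on UNIV f1"
    using f C2w_cont0 C2w_cont1 by blast+
  have pf: "f (t + 2*pi) = f t" "f1 (t + 2*pi) = f1 t" for t
    using f C2wD(1) C2w_per1 by blast+
  define d where "d t = f t - f (t + pi)" for t
  have "continuous_on UNIV (\<lambda>t::real. t + pi)" by (intro continuous_intros)
  then have "continuous_on UNIV (\<lambda>t. f (t + pi))"
    using continuous_on_compose2[OF cf(1), of UNIV "\<lambda>t. t+pi"] by auto
  then have "continuous_on UNIV d" unfolding d_def using cf by (auto intro!: continuous_intros)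
  then have cd: "isCont d t" for t
    by (simp add: continuous_on_eq_continuous_at)
  have dpi: "d pi = - d 0" using pf(1)[of 0] by (simp add: d_def)
  obtain a where a: "0 \<le> a" "a \<le> pi" "d a = 0"
  proof (cases "d 0 \<le> 0")
    case True
    then show ?thesis using IVT[of d 0 0 pi] cd dpi that by auto
  next
    case False
    then show ?thesis using IVT2[of d pi 0 0] cd dpi that by auto
  qed
  define u where "u t = f t - f a" for t
  have du: "(u has_real_derivative f1 t) (at t)" for t
    unfolding u_def using C2wD(2)[OF f] by (auto intro!: derivative_eq_intros)
  have u0: "u a = 0" "u (a + pi) = 0" "u (a + 2*pi) = 0"
    using a(3) pf(1)[of a] by (auto simp: u_def d_def)
  have cu: "continuous_on UNIV u" unfolding u_def using cf by (auto intro!: continuous_intros)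
  have h1: "(pi/((a+pi)-a))^2 * integral {a..a+pi} (\<lambda>t. (u t)^2) \<le> integral {a..a+pi} (\<lambda>t. (f1 t)^2)"
    by (rule dirichlet_lim[OF _ du cf(2) u0(1,2)]) simp
  have h2: "(pi/((a+2*pi)-(a+pi)))^2 * integral {a+pi..a+2*pi} (\<lambda>t. (u t)^2) \<le> integral {a+pi..a+2*pi} (\<lambda>t. (f1 t)^2)"
    by (rule dirichlet_lim[OF _ du cf(2) u0(2,3)]) simp
  have comb: "integral {a..a+pi} F + integral {a+pi..a+2*pi} F = integral {a..a+2*pi} F"
    if "continuous_on UNIV F" for F :: "real \<Rightarrow> real"
    by (rule Henstock_Kurzweil_Integration.integral_combine) (auto intro: int_cont that)
  have "integral {a..a+2*pi} (\<lambda>t. (u t)^2) \<le> integral {a..a+2*pi} (\<lambda>t. (f1 t)^2)"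
    using h1 h2 comb[of "\<lambda>t. (u t)^2"] comb[of "\<lambda>t. (f1 t)^2"] cu cf
    by (simp add: continuous_intros)
  moreover have "integral {a..a+2*pi} (\<lambda>t. (u t)^2) = Ip (\<lambda>t. (u t)^2)"
    by (rule per_shift) (use cu a in \<open>auto intro!: continuous_intros simp: u_def pf\<close>)
  moreover have "integral {a..a+2*pi} (\<lambda>t. (f1 t)^2) = Ip (\<lambda>t. (f1 t)^2)"
    by (rule per_shift) (use cf a in \<open>auto intro!: continuous_intros simp: pf\<close>)
  moreover have "Ip (\<lambda>t. (u t)^2) = Ip (\<lambda>t. (f t)^2) + 2*pi*(f a)^2"
  proof -
    have "Ip (\<lambda>t. (u t)^2) = Ip (\<lambda>t. (f t)^2) - 2 * Ip (\<lambda>t. f t * f a) + Ip (\<lambda>t. (f a)^2)"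
      unfolding u_def by (rule Ip_sq_diff) (use cf in \<open>auto intro!: continuous_intros\<close>)
    also have "Ip (\<lambda>t. f t * f a) = 0" using f0 by simp
    finally show ?thesis by simp
  qed
  ultimately show ?thesis by (smt (verit) zero_le_power2 pi_gt_zero mult_nonneg_nonneg)
qed

lemma Ip_add: "continuous_on UNIV A \<Longrightarrow> continuous_on UNIV B \<Longrightarrow> Ip (\<lambda>t. A t + B t) = Ip A + Ip B"
  by (intro integral_add int_cont)

lemma Ip_diff: "continuous_on UNIV A \<Longrightarrow> continuous_on UNIV B \<Longrightarrow> Ip (\<lambda>t. A t - B t) = Ip A - Ip B"
  by (intro integral_diff int_cont)

lemma cont_shift: "continuous_on UNIV (f::real\<Rightarrow>real) \<Longrightarrow> continuous_on UNIV (\<lambda>t. f (t + s))"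
proof -
  assume cf: "continuous_on UNIV f"
  have "continuous_on UNIV (\<lambda>t::real. t + s)" by (intro continuous_intros)
  then show ?thesis using continuous_on_compose2[OF cf, of UNIV "\<lambda>t. t+s"] by auto
qed

lemma cos_shift1: "cos (x + pi/2) = - sin x" "sin (x + pi/2) = cos x"
  by (simp_all add: cos_add sin_add)

lemma cos_shift: "cos (x + pi/2) = - sin x" "sin (x + pi/2) = cos x"
  "cos (x + pi) = - cos x" "sin (x + pi) = - sin x"
  "cos (x + 3*pi/2) = sin x" "sin (x + 3*pi/2) = - cos x"
proof -
  show "cos (x + pi/2) = - sin x" "sin (x + pi/2) = cos x" by (rule cos_shift1)+
  show "cos (x + pi) = - cos x" "sin (x + pi) = - sin x" by simp_all
  have e: "x + 3*pi/2 = (x + pi) + pi/2" by simp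
  show "cos (x + 3*pi/2) = sin x" "sin (x + 3*pi/2) = - cos x"
    unfolding e cos_shift1 by simp_all
qed

lemma wirt2:
  assumes f: "C2w f f1 f2" and f0: "Ip f = 0" and fc: "Ip (\<lambda>t. f t * cos t) = 0"
    and fs: "Ip (\<lambda>t. f t * sin t) = 0"
  shows "4 * Ip (\<lambda>t. (f t)^2) \<le> Ip (\<lambda>t. (f1 t)^2)"
proof -
  have cf: "continuous_on UNIV f" "continuous_on UNIV f1"
    using f C2w_cont0 C2w_cont1 by blast+
  have pf: "f (t + 2*pi) = f t" "f1 (t + 2*pi) = f1 t" for t
    using f C2wD(1) C2w_per1 by blast+
  define d where "d t = f t + f (t + pi) - f (t + pi/2) - f (t + 3*pi/2)" for t
  have "continuous_on UNIV d" unfolding d_def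
    using cf cont_shift[OF cf(1)] by (intro continuous_intros) auto
  then have cd: "isCont d t" for t
    by (simp add: continuous_on_eq_continuous_at)
  have dpi: "d (pi/2) = - d 0"
  proof -
    have e: "pi/2+pi = 3*pi/2" "pi/2+pi/2 = pi" "pi/2 + 3*pi/2 = 0 + 2*pi" by simp_all
    show ?thesis unfolding d_def e pf by simp
  qed
  obtain a where a: "0 \<le> a" "a \<le> pi/2" "d a = 0"
  proof (cases "d 0 \<le> 0")
    case True
    then show ?thesis using IVT[of d 0 0 "pi/2"] cd dpi that by auto
  next
    case False
    then show ?thesis using IVT2[of d "pi/2" 0 0] cd dpi that by auto
  qed
  define D1 where "D1 = f a - f (a + pi)"
  define D2 where "D2 = f (a + pi/2) - f (a + 3*pi/2)"
  define c0 where "c0 = (f a + f (a + pi)) / 2"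
  define al where "al = (D1 * cos a - D2 * sin a) / 2"
  define be where "be = (D1 * sin a + D2 * cos a) / 2"
  define p where "p t = c0 + al * cos t + be * sin t" for t
  define p1 where "p1 t = - al * sin t + be * cos t" for t
  define p2 where "p2 t = - al * cos t - be * sin t" for t
  have pC: "C2w p p1 p2"
    unfolding C2w_def p_def[abs_def] p1_def[abs_def] p2_def[abs_def]
    by (auto intro!: derivative_eq_intros continuous_intros)
  have cp: "continuous_on UNIV p" "continuous_on UNIV p1"
    using pC C2w_cont0 C2w_cont1 by blast+
  have sc: "(sin a)^2 + (cos a)^2 = 1" by simp
  have c0': "c0 = (f (a + pi/2) + f (a + 3*pi/2)) / 2" using a(3) by (simp add: c0_def d_def)
  have pa: "p a = f a"
  proof -
    have "p a = c0 + D1/2 * ((sin a)^2 + (cos a)^2)"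
      by (simp add: p_def al_def be_def field_simps power2_eq_square del: sin_cos_squared_add sin_cos_squared_add2 sin_cos_squared_add3)
    then show ?thesis by (simp add: c0_def D1_def field_simps)
  qed
  have pa1: "p (a + pi/2) = f (a + pi/2)"
  proof -
    have "p (a + pi/2) = c0 + D2/2 * ((sin a)^2 + (cos a)^2)"
      unfolding p_def cos_shift by (simp add: al_def be_def field_simps power2_eq_square del: sin_cos_squared_add sin_cos_squared_add2 sin_cos_squared_add3)
    then show ?thesis by (simp add: c0' D2_def field_simps)
  qed
  have pa2: "p (a + pi) = f (a + pi)"
  proof -
    have "p (a + pi) = c0 - D1/2 * ((sin a)^2 + (cos a)^2)"
      unfolding p_def cos_shift by (simp add: al_def be_def field_simps power2_eq_square del: sin_cos_squared_add sin_cos_squared_add2 sin_cos_squared_add3)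
    then show ?thesis by (simp add: c0_def D1_def field_simps)
  qed
  have pa3: "p (a + 3*pi/2) = f (a + 3*pi/2)"
  proof -
    have "p (a + 3*pi/2) = c0 - D2/2 * ((sin a)^2 + (cos a)^2)"
      unfolding p_def cos_shift by (simp add: al_def be_def field_simps power2_eq_square del: sin_cos_squared_add sin_cos_squared_add2 sin_cos_squared_add3)
    then show ?thesis by (simp add: c0' D2_def field_simps)
  qed
  have pa4: "p (a + 2*pi) = f (a + 2*pi)"
    using pa C2wD(1)[OF pC, of a] pf(1)[of a] by simp
  define u where "u t = f t - p t" for t
  define u1 where "u1 t = f1 t - p1 t" for t
  have du: "(u has_real_derivative u1 t) (at t)" for t
    unfolding u_def[abs_def] u1_def using C2wD(2)[OF f] C2wD(2)[OF pC]
    by (auto intro!: derivative_eq_intros)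
  have cu: "continuous_on UNIV u" "continuous_on UNIV u1"
    unfolding u_def[abs_def] u1_def[abs_def] using cf cp by (auto intro!: continuous_intros)
  have z: "u a = 0" "u (a + pi/2) = 0" "u (a + pi) = 0" "u (a + 3*pi/2) = 0" "u (a + 2*pi) = 0"
    using pa pa1 pa2 pa3 pa4 by (auto simp: u_def)
  have q: "(pi / (y - x))^2 = 4" if "y - x = pi/2" for x y :: real
  proof -
    have "pi / (y - x) = 2" unfolding that by simp
    then show ?thesis by simp
  qed
  have e1: "a + pi/2 - a = pi/2" "a + pi - (a + pi/2) = pi/2" "a + 3*pi/2 - (a + pi) = pi/2"
    "a + 2*pi - (a + 3*pi/2) = pi/2" by simp_all
  have h1: "4 * integral {a..a+pi/2} (\<lambda>t. (u t)^2) \<le> integral {a..a+pi/2} (\<lambda>t. (u1 t)^2)"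
    using dirichlet_lim[OF _ du cu(2) z(1,2)] q[OF e1(1)] by simp
  have h2: "4 * integral {a+pi/2..a+pi} (\<lambda>t. (u t)^2) \<le> integral {a+pi/2..a+pi} (\<lambda>t. (u1 t)^2)"
    using dirichlet_lim[OF _ du cu(2) z(2,3)] q[OF e1(2)] by simp
  have h3: "4 * integral {a+pi..a+3*pi/2} (\<lambda>t. (u t)^2) \<le> integral {a+pi..a+3*pi/2} (\<lambda>t. (u1 t)^2)"
    using dirichlet_lim[OF _ du cu(2) z(3,4)] q[OF e1(3)] by simp
  have h4: "4 * integral {a+3*pi/2..a+2*pi} (\<lambda>t. (u t)^2) \<le> integral {a+3*pi/2..a+2*pi} (\<lambda>t. (u1 t)^2)"
    using dirichlet_lim[OF _ du cu(2) z(4,5)] q[OF e1(4)] by simp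
  have comb: "integral {a..a+pi/2} F + integral {a+pi/2..a+pi} F + integral {a+pi..a+3*pi/2} F
      + integral {a+3*pi/2..a+2*pi} F = integral {a..a+2*pi} F"
    if "continuous_on UNIV F" for F :: "real \<Rightarrow> real"
  proof -
    have i: "F integrable_on {x..y}" for x y using that by (rule int_cont)
    have "integral {a..a+pi/2} F + integral {a+pi/2..a+pi} F = integral {a..a+pi} F"
      by (rule Henstock_Kurzweil_Integration.integral_combine) (auto intro: i)
    moreover have "integral {a..a+pi} F + integral {a+pi..a+3*pi/2} F = integral {a..a+3*pi/2} F"
      by (rule Henstock_Kurzweil_Integration.integral_combine) (auto intro: i)
    moreover have "integral {a..a+3*pi/2} F + integral {a+3*pi/2..a+2*pi} F = integral {a..a+2*pi} F"
      by (rule Henstock_Kurzweil_Integration.integral_combine) (auto intro: i)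
    ultimately show ?thesis by linarith
  qed
  have cu2: "continuous_on UNIV (\<lambda>t. (u t)^2)" "continuous_on UNIV (\<lambda>t. (u1 t)^2)"
    using cu by (auto intro!: continuous_intros)
  have "4 * integral {a..a+2*pi} (\<lambda>t. (u t)^2) \<le> integral {a..a+2*pi} (\<lambda>t. (u1 t)^2)"
    using h1 h2 h3 h4 comb[OF cu2(1)] comb[OF cu2(2)] by linarith
  moreover have "integral {a..a+2*pi} (\<lambda>t. (u t)^2) = Ip (\<lambda>t. (u t)^2)"
    by (rule per_shift[OF cu2(1)]) (use a C2wD(1)[OF pC] in \<open>auto simp: u_def pf\<close>)
  moreover have "integral {a..a+2*pi} (\<lambda>t. (u1 t)^2) = Ip (\<lambda>t. (u1 t)^2)"
    by (rule per_shift[OF cu2(2)]) (use a C2w_per1[OF pC] in \<open>auto simp: u1_def pf\<close>)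
  ultimately have main: "4 * Ip (\<lambda>t. (u t)^2) \<le> Ip (\<lambda>t. (u1 t)^2)" by simp
  have fp: "Ip (\<lambda>t. f t * p t) = 0"
  proof -
    have "Ip (\<lambda>t. f t * p t) = Ip (\<lambda>t. (c0 * f t + al * (f t * cos t)) + be * (f t * sin t))"
      by (simp add: p_def algebra_simps)
    also have "\<dots> = c0 * Ip f + al * Ip (\<lambda>t. f t * cos t) + be * Ip (\<lambda>t. f t * sin t)"
      using cf by (subst Ip_add, (auto intro!: continuous_intros)[2], subst Ip_add,
          (auto intro!: continuous_intros)[2]) simp
    finally show ?thesis using f0 fc fs by simp
  qed
  have fp2: "Ip (\<lambda>t. f t * p2 t) = 0"
  proof -
    have "Ip (\<lambda>t. f t * p2 t) = Ip (\<lambda>t. (- al) * (f t * cos t) + (- be) * (f t * sin t))"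
      by (simp add: p2_def algebra_simps)
    also have "\<dots> = (- al) * Ip (\<lambda>t. f t * cos t) + (- be) * Ip (\<lambda>t. f t * sin t)"
      using cf by (subst Ip_add, (auto intro!: continuous_intros)[2]) simp
    finally show ?thesis using fc fs by simp
  qed
  have fp1: "Ip (\<lambda>t. f1 t * p1 t) = 0" using parts[OF f pC] fp2 by simp
  have U: "Ip (\<lambda>t. (u t)^2) = Ip (\<lambda>t. (f t)^2) + Ip (\<lambda>t. (p t)^2)"
    unfolding u_def using Ip_sq_diff[OF cf(1) cp(1)] fp by simp
  have U1: "Ip (\<lambda>t. (u1 t)^2) = Ip (\<lambda>t. (f1 t)^2) + Ip (\<lambda>t. (p1 t)^2)"
    unfolding u1_def using Ip_sq_diff[OF cf(2) cp(2)] fp1 by simp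
  have pp: "Ip (\<lambda>t. (p t)^2) - Ip (\<lambda>t. (p1 t)^2) = 2*pi*c0^2"
  proof -
    define P where "P t = c0^2 * t + 2*c0*al * sin t - 2*c0*be * cos t + (al^2 - be^2) * sin (2*t) / 2 - al*be * cos (2*t)" for t
    have dP: "(P has_real_derivative ((p t)^2 - (p1 t)^2)) (at t)" for t
    proof -
      have "(P has_real_derivative (c0^2 + 2*c0*al * cos t + 2*c0*be * sin t + (al^2 - be^2) * (cos (2*t) * 2) / 2 + al*be * (sin (2*t) * 2))) (at t)"
        unfolding P_def[abs_def] by (auto intro!: derivative_eq_intros)
      moreover have "c0^2 + 2*c0*al * cos t + 2*c0*be * sin t + (al^2 - be^2) * (cos (2*t) * 2) / 2 + al*be * (sin (2*t) * 2)
          = (p t)^2 - (p1 t)^2"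
        unfolding p_def p1_def cos_double sin_double by (simp add: power2_eq_square algebra_simps field_simps)
      ultimately show ?thesis by simp
    qed
    have "Ip (\<lambda>t. (p t)^2 - (p1 t)^2) = P (2*pi) - P 0"
      by (rule ftc_int') (auto intro: dP)
    also have "\<dots> = 2*pi*c0^2" by (simp add: P_def sin4pi cos4pi)
    moreover have "continuous_on UNIV (\<lambda>t. (p t)^2)" "continuous_on UNIV (\<lambda>t. (p1 t)^2)"
      using cp by (auto intro!: continuous_intros)
    ultimately show ?thesis using Ip_diff[of "\<lambda>t. (p t)^2" "\<lambda>t. (p1 t)^2"] by simp
  qed
  have p0: "Ip (\<lambda>t. (p t)^2) \<ge> 0"
    by (rule integral_nonneg) (use cp in \<open>auto intro!: int_cont continuous_intros\<close>)
  have c00: "2*pi*c0^2 \<ge> 0" by simp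
  show ?thesis using main U U1 pp p0 c00 by linarith
qed

lemma minkowski:
  assumes k: "C2w k k1 k2" and f: "C2w f f1 f2" and kpos: "Ip k > 0"
    and Bkk: "Bf k k \<ge> 0" and Bfk: "Bf f k = 0"
  shows "Bf f f \<le> 0"
proof -
  define tau where "tau = Ip f / Ip k"
  define g where "g t = f t - tau * k t" for t
  have gC: "C2w g (\<lambda>t. f1 t - tau * k1 t) (\<lambda>t. f2 t - tau * k2 t)"
    unfolding g_def by (intro C2w_diff C2w_cmult f k)
  have ck: "continuous_on UNIV k" "continuous_on UNIV k2" using k C2w_cont0 C2w_cont2 by blast+
  have cf: "continuous_on UNIV f" "continuous_on UNIV f2" using f C2w_cont0 C2w_cont2 by blast+
  have "Ip g = Ip f - tau * Ip k"
    unfolding g_def using ck cf by (subst Ip_diff) (auto intro!: continuous_intros)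
  then have g0: "Ip g = 0" using kpos by (simp add: tau_def)
  have "Bf g g \<le> 0" using wirt1[OF gC g0] Bf_self[OF gC] by simp
  moreover have "Bf g g = Bf f f - tau * Bf k f - tau * Bf f k + tau^2 * Bf k k"
  proof -
    have D: "D2 g t = D2 f t - tau * D2 k t" for t
      using C2w_D2[OF gC, of t] C2w_D2[OF f, of t] C2w_D2[OF k, of t] by (simp add: g_def algebra_simps)
    have cD: "continuous_on UNIV (D2 f)" "continuous_on UNIV (D2 k)"
      using C2w_D2[OF f] C2w_D2[OF k] cf ck by (auto intro!: continuous_intros)
    have "Bf g g = Ip (\<lambda>t. ((f t * D2 f t - tau * (k t * D2 f t)) - tau * (f t * D2 k t)) + tau^2 * (k t * D2 k t))"
      unfolding Bf_def D by (simp add: g_def power2_eq_square algebra_simps)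
    also have "\<dots> = ((Ip (\<lambda>t. f t * D2 f t) - tau * Ip (\<lambda>t. k t * D2 f t)) - tau * Ip (\<lambda>t. f t * D2 k t)) + tau^2 * Ip (\<lambda>t. k t * D2 k t)"
      using cD cf ck
      by (subst Ip_add, (auto intro!: continuous_intros)[2], subst Ip_diff, (auto intro!: continuous_intros)[2],
          subst Ip_diff, (auto intro!: continuous_intros)[2]) simp
    finally show ?thesis by (simp add: Bf_def)
  qed
  moreover have "Bf k f = 0" using Bf_sym[OF k f] Bfk by simp
  moreover have "tau^2 * Bf k k \<ge> 0" using Bkk by simp
  ultimately show ?thesis using Bfk by simp
qed

lemma inner2: "(x::real^2) \<bullet> y = x$1 * y$1 + x$2 * y$2"
  by (simp add: inner_vec_def sum_2)

lemma dir_nth [simp]: "dir t $ 1 = cos t" "dir t $ 2 = sin t"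
  by (simp_all add: dir_def)

lemma inner_dir: "(x::real^2) \<bullet> dir t = x$1 * cos t + x$2 * sin t"
  by (simp add: inner2)

lemma norm_dir: "norm (dir t) = 1"
  by (simp add: norm_eq_sqrt_inner inner2)

lemma vec2_eq: "(x::real^2) = y \<longleftrightarrow> x$1 = y$1 \<and> x$2 = y$2"
  by (simp add: vec_eq_iff forall_2)

definition X2 :: "real \<Rightarrow> real \<Rightarrow> real^2" where
  "X2 a b = vector [a, b]"

lemma X2_nth [simp]: "X2 a b $ 1 = a" "X2 a b $ 2 = b"
  by (simp_all add: X2_def)

lemma X2_eta: "X2 (x$1) (x$2) = x"
  by (simp add: vec2_eq)

lemma pyth1: "cos t * (cos t * a) + sin t * (sin t * a) = (a::real)"
proof -
  have "cos t * (cos t * a) + sin t * (sin t * a) = (cos t * cos t + sin t * sin t) * a"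
    by (simp add: distrib_right mult.assoc del: sin_cos_squared_add3)
  then show ?thesis by simp
qed

lemma pyth2: "a * (cos t * cos t) + a * (sin t * sin t) = (a::real)"
  using pyth1[of t a] by (simp add: algebra_simps)

locale cb =
  fixes L :: "(real^2) set"
  assumes cpt: "compact L" and cvx: "convex L" and int0: "0 \<in> interior L"
    and C2: "C2_circle (supp L)" and Dpos: "\<And>t. D2 (supp L) t > 0"
begin

abbreviation "h \<equiv> supp L"
abbreviation "h1 \<equiv> deriv (supp L)"
abbreviation "h2 \<equiv> deriv (deriv (supp L))"

lemma hC: "C2w h h1 h2" using C2 by (rule C2_C2w)

lemma Dh: "D2 h t = h2 t + h t" by (rule C2w_D2[OF hC])

lemma Dpos': "h2 t + h t > 0" using Dpos[of t] Dh by simp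

lemma nonempty: "L \<noteq> {}" using int0 interior_subset by blast

lemma bdd: "bdd_above ((\<lambda>x. x \<bullet> dir t) ` L)"
proof -
  have "compact ((\<lambda>x. x \<bullet> dir t) ` L)"
    by (rule compact_continuous_image[OF _ cpt]) (intro continuous_intros)
  then show ?thesis by (simp add: bounded_imp_bdd_above compact_imp_bounded)
qed

lemma supp_upper: "x \<in> L \<Longrightarrow> x \<bullet> dir t \<le> h t"
  unfolding supp_def by (rule cSup_upper) (auto simp: bdd)

lemma supp_attained: "\<exists>p\<in>L. p \<bullet> dir t = h t"
proof -
  have "\<exists>x\<in>L. \<forall>y\<in>L. y \<bullet> dir t \<le> x \<bullet> dir t"
    by (rule continuous_attains_sup[OF cpt nonempty]) (intro continuous_intros)
  then obtain p where p: "p \<in> L" "\<And>y. y \<in> L \<Longrightarrow> y \<bullet> dir t \<le> p \<bullet> dir t" by blast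
  have "h t = p \<bullet> dir t" unfolding supp_def
    by (rule cSup_eq_maximum) (use p in auto)
  then show ?thesis using p by auto
qed

lemma hpos: "h t > 0"
proof -
  obtain e where e: "e > 0" "ball 0 e \<subseteq> L" using int0 mem_interior by blast
  have "(e/2) *\<^sub>R dir t \<in> ball 0 e" using e by (simp add: norm_dir)
  then have "(e/2) *\<^sub>R dir t \<in> L" using e by blast
  then have "((e/2) *\<^sub>R dir t) \<bullet> dir t \<le> h t" by (rule supp_upper)
  moreover have "((e/2) *\<^sub>R dir t) \<bullet> dir t = e/2"
    by (simp add: inner_dir algebra_simps pyth1 pyth2)
  ultimately show ?thesis using e by simp
qed

definition x1 :: "real \<Rightarrow> real" where "x1 t = h t * cos t - h1 t * sin t"
definition x2 :: "real \<Rightarrow> real" where "x2 t = h t * sin t + h1 t * cos t"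
definition X :: "real \<Rightarrow> real^2" where "X t = X2 (x1 t) (x2 t)"

lemma X_dir: "X t \<bullet> dir t = h t"
  by (simp add: X_def inner_dir x1_def x2_def algebra_simps pyth1 pyth2)

lemma hper: "h (t + 2*pi) = h t" "h1 (t + 2*pi) = h1 t" "h2 (t + 2*pi) = h2 t"
  using C2wD(1)[OF hC] C2w_per1[OF hC] C2w_per2[OF hC] by auto

lemma Xper: "X (t + 2*pi) = X t"
  by (simp add: X_def x1_def x2_def hper)

lemma dx1: "(x1 has_real_derivative (- (h2 t + h t) * sin t)) (at t)"
proof -
  have "(x1 has_real_derivative (h1 t * cos t + h t * (- sin t) - (h2 t * sin t + h1 t * cos t))) (at t)"
    unfolding x1_def[abs_def] using C2wD(2,3)[OF hC]
    by (auto intro!: derivative_eq_intros)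
  then show ?thesis by (simp add: algebra_simps)
qed

lemma dx2: "(x2 has_real_derivative ((h2 t + h t) * cos t)) (at t)"
proof -
  have "(x2 has_real_derivative (h1 t * sin t + h t * cos t + (h2 t * cos t + h1 t * (- sin t)))) (at t)"
    unfolding x2_def[abs_def] using C2wD(2,3)[OF hC]
    by (auto intro!: derivative_eq_intros)
  then show ?thesis by (simp add: algebra_simps)
qed

lemma phi_derivs:
  fixes q :: "real^2"
  shows "((\<lambda>s. h s - (q$1 * cos s + q$2 * sin s)) has_real_derivative (h1 t - (- q$1 * sin t + q$2 * cos t))) (at t)"
    "((\<lambda>s. h1 s - (- q$1 * sin s + q$2 * cos s)) has_real_derivative (h2 t + (q$1 * cos t + q$2 * sin t))) (at t)"
  using C2wD(2,3)[OF hC] by (auto intro!: derivative_eq_intros simp: algebra_simps)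

lemma min_deriv0:
  fixes q :: "real^2"
  assumes le: "\<And>s. q \<bullet> dir s \<le> h s" and eq: "q \<bullet> dir t = h t"
  shows "h1 t = - q$1 * sin t + q$2 * cos t"
proof -
  have "h1 t - (- q$1 * sin t + q$2 * cos t) = 0"
  proof (rule DERIV_local_min[OF phi_derivs(1)[of q t], of 1])
    show "\<forall>y. \<bar>t - y\<bar> < 1 \<longrightarrow> h t - (q $ 1 * cos t + q $ 2 * sin t) \<le> h y - (q $ 1 * cos y + q $ 2 * sin y)"
      using le eq by (auto simp: inner_dir)
  qed simp
  then show ?thesis by simp
qed

lemma supp_unique:
  fixes q :: "real^2"
  assumes le: "\<And>s. q \<bullet> dir s \<le> h s" and eq: "q \<bullet> dir t = h t"
  shows "q = X t"
proof -
  have a: "h t = q$1 * cos t + q$2 * sin t" using eq by (simp add: inner_dir)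
  have b: "h1 t = - q$1 * sin t + q$2 * cos t" by (rule min_deriv0[OF le eq])
  have sc: "(sin t)^2 + (cos t)^2 = 1" by simp
  have "x1 t = q$1 * ((sin t)^2 + (cos t)^2)" "x2 t = q$2 * ((sin t)^2 + (cos t)^2)"
    unfolding x1_def x2_def a b
    by (simp_all add: algebra_simps power2_eq_square del: sin_cos_squared_add sin_cos_squared_add2 sin_cos_squared_add3)
  then show ?thesis by (simp add: X_def vec2_eq)
qed

lemma X_in: "X t \<in> L"
proof -
  obtain p where p: "p \<in> L" "p \<bullet> dir t = h t" using supp_attained by blast
  have "p = X t" by (rule supp_unique) (use p supp_upper in auto)
  then show ?thesis using p by simp
qed

lemma X_le: "X t \<bullet> dir s \<le> h s" using X_in supp_upper by blast

lemma X_nz: "X t \<noteq> 0" using X_dir[of t] hpos[of t] by auto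

end

lemma no_double_zero:
  fixes p p1 p2 :: "real \<Rightarrow> real"
  assumes d1: "\<And>t. (p has_real_derivative p1 t) (at t)"
    and d2: "\<And>t. (p1 has_real_derivative p2 t) (at t)"
    and pos: "\<And>t. p2 t + p t > 0" and ab: "a < b" "b \<le> a + pi"
    and z: "p a = 0" "p1 a = 0" "p b = 0" "p1 b = 0"
  shows False
proof -
  define q where "q s = p1 s * sin (s - a) - p s * cos (s - a)" for s
  have dq: "(q has_real_derivative ((p2 s + p s) * sin (s - a))) (at s)" for s
  proof -
    have "(q has_real_derivative (p2 s * sin (s - a) + p1 s * (cos (s - a) * 1)
        - (p1 s * cos (s - a) + p s * (- sin (s - a) * 1)))) (at s)"
      unfolding q_def[abs_def] by (auto intro!: derivative_eq_intros d1 d2)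
    then show ?thesis by (simp add: algebra_simps)
  qed
  obtain c where c: "a < c" "c < b" "q b - q a = (b - a) * ((p2 c + p c) * sin (c - a))"
    using MVT2[OF ab(1), of q "\<lambda>s. (p2 s + p s) * sin (s - a)"] dq by blast
  have q0: "q b - q a = 0" using z by (simp add: q_def)
  have "sin (c - a) > 0" using c ab by (intro sin_gt_zero) auto
  then have "(b - a) * ((p2 c + p c) * sin (c - a)) > 0" using ab pos[of c] by simp
  then show False using c q0 by simp
qed

lemma per_nat: "(\<And>s. f (s + 2*pi) = f s) \<Longrightarrow> f (s + 2*pi*real n) = f s"
proof (induction n)
  case 0 then show ?case by simp
next
  case (Suc n)
  have "f (s + 2*pi*real (Suc n)) = f ((s + 2*pi*real n) + 2*pi)" by (simp add: algebra_simps)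
  also have "\<dots> = f (s + 2*pi*real n)" by (rule Suc.prems)
  finally show ?case using Suc by simp
qed

lemma per_int: assumes "\<And>s. f (s + 2*pi) = f s" shows "f (s + 2*pi* of_int k) = f s"
proof (cases "k \<ge> 0")
  case True
  then obtain n where "k = int n" by (metis nonneg_eq_int)
  then show ?thesis using per_nat[of f, OF assms] by simp
next
  case False
  obtain n where n: "k = - int n" using False by (intro that[of "nat (-k)"]) simp
  have "f s = f ((s + 2*pi* of_int k) + 2*pi*real n)" by (simp add: n)
  also have "\<dots> = f (s + 2*pi* of_int k)" by (rule per_nat[of f, OF assms])
  finally show ?thesis by simp
qed

lemma reduce: "\<exists>s' k. 0 \<le> s' \<and> s' < 2*pi \<and> s = s' + 2*pi* of_int k"
proof -
  define k where "k = floor (s / (2*pi))"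
  have "of_int k \<le> s / (2*pi)" "s / (2*pi) < of_int k + 1" unfolding k_def by linarith+
  then have "2*pi* of_int k \<le> s" "s < 2*pi* of_int k + 2*pi"
    by (simp_all add: field_simps)
  then show ?thesis by (intro exI[of _ "s - 2*pi* of_int k"] exI[of _ k]) auto
qed

lemma per_reduce: assumes "\<And>s. f (s + 2*pi) = f s" shows "\<exists>s'. 0 \<le> s' \<and> s' < 2*pi \<and> f s' = f s"
  using reduce[of s] per_int[of f, OF assms] by metis

lemma dir_per: "dir (t + 2*pi) = dir t" by (simp add: dir_def)

context cb
begin

definition phi where "phi q s = h s - (q$1 * cos s + q$2 * sin s)" for q :: "real^2"
definition phi1 where "phi1 q s = h1 s - (- q$1 * sin s + q$2 * cos s)" for q :: "real^2"
definition phi2 where "phi2 q s = h2 s + (q$1 * cos s + q$2 * sin s)" for q :: "real^2"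

lemma phi_zero:
  assumes le: "\<And>s. q \<bullet> dir s \<le> h s" and eq: "q \<bullet> dir t = h t"
  shows "phi q t = 0" "phi1 q t = 0"
  using eq min_deriv0[OF le eq] by (auto simp: phi_def phi1_def inner_dir)

lemma X_inj_lt:
  assumes t: "0 \<le> t1" "t1 < t2" "t2 < 2*pi" and eq: "X t1 = X t2"
  shows False
proof -
  define q where "q = X t1"
  have le: "q \<bullet> dir s \<le> h s" for s unfolding q_def by (rule X_le)
  have d1: "(phi q has_real_derivative phi1 q t) (at t)" for t
    unfolding phi_def[abs_def] phi1_def using phi_derivs(1) by simp
  have d2: "(phi1 q has_real_derivative phi2 q t) (at t)" for t
    unfolding phi1_def[abs_def] phi2_def using phi_derivs(2) by simp
  have pos: "phi2 q t + phi q t > 0" for t using Dpos'[of t] by (simp add: phi_def phi2_def)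
  have e1: "q \<bullet> dir t1 = h t1" unfolding q_def by (rule X_dir)
  have e2: "q \<bullet> dir t2 = h t2" unfolding q_def eq by (rule X_dir)
  have e3: "q \<bullet> dir (t1 + 2*pi) = h (t1 + 2*pi)" using e1 by (simp add: dir_per hper)
  note z1 = phi_zero[OF le e1] and z2 = phi_zero[OF le e2] and z3 = phi_zero[OF le e3]
  show False
  proof (cases "t2 \<le> t1 + pi")
    case True
    show False using no_double_zero[OF d1 d2 pos t(2) True z1 z2] .
  next
    case False
    then show False using no_double_zero[OF d1 d2 pos _ _ z2 z3] t by linarith
  qed
qed

lemma X_inj:
  assumes "0 \<le> t1" "t1 < 2*pi" "0 \<le> t2" "t2 < 2*pi" "X t1 = X t2"
  shows "t1 = t2"
  using X_inj_lt[of t1 t2] X_inj_lt[of t2 t1] assms by (cases t1 t2 rule: linorder_cases) auto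

definition Phi :: "real^2 \<Rightarrow> real^2" where "Phi v = (v$1) *\<^sub>R X (v$2)"

definition SS :: "(real^2) set" where "SS = {v. 0 < v$1 \<and> v$1 \<le> 1 \<and> 0 \<le> v$2 \<and> v$2 < 2*pi}"

lemma Phi_inj: "inj_on Phi SS"
proof (rule inj_onI)
  fix v w assume v: "v \<in> SS" and w: "w \<in> SS" and eq: "Phi v = Phi w"
  have le: "r1 \<le> r2" if r: "r1 > 0" "r2 > 0" and e: "r1 *\<^sub>R X t1 = r2 *\<^sub>R X t2" for r1 r2 t1 t2
  proof -
    have "r1 * h t1 = (r1 *\<^sub>R X t1) \<bullet> dir t1" by (simp add: X_dir)
    also have "\<dots> = r2 * (X t2 \<bullet> dir t1)" by (simp add: e)
    also have "\<dots> \<le> r2 * h t1" using X_le r by (intro mult_left_mono) auto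
    finally show ?thesis using hpos[of t1] by simp
  qed
  have r: "v$1 = w$1" using le[of "v$1" "w$1" "v$2" "w$2"] le[of "w$1" "v$1" "w$2" "v$2"] v w eq
    by (force simp: SS_def Phi_def)
  then have "X (v$2) = X (w$2)" using eq v by (auto simp: Phi_def SS_def)
  then have "v$2 = w$2" using X_inj v w by (auto simp: SS_def)
  then show "v = w" using r by (simp add: vec2_eq)
qed

lemma zero_in: "0 \<in> L" using int0 interior_subset by blast

lemma Phi_sub: "Phi ` SS \<subseteq> L - {0}"
proof
  fix y assume "y \<in> Phi ` SS"
  then obtain v where v: "v \<in> SS" "y = (v$1) *\<^sub>R X (v$2)" by (auto simp: Phi_def)
  have "(v$1) *\<^sub>R X (v$2) + (1 - v$1) *\<^sub>R 0 \<in> L"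
    by (rule convexD[OF cvx X_in zero_in]) (use v in \<open>auto simp: SS_def\<close>)
  moreover have "y \<noteq> 0" using v X_nz by (auto simp: SS_def)
  ultimately show "y \<in> L - {0}" using v by simp
qed

lemma hcont: "continuous_on UNIV h" by (rule C2w_cont0[OF hC])

lemma Phi_sup: "L - {0} \<subseteq> Phi ` SS"
proof
  fix y assume y: "y \<in> L - {0}"
  define m where "m s = (y \<bullet> dir s) / h s" for s
  have cm: "continuous_on {0..2*pi} m"
    unfolding m_def inner_dir using hpos hcont
    by (auto intro!: continuous_intros intro: continuous_on_subset[OF hcont] simp: less_imp_neq[symmetric])
  obtain t where t: "t \<in> {0..2*pi}" "\<And>s. s \<in> {0..2*pi} \<Longrightarrow> m s \<le> m t"
    using continuous_attains_sup[OF compact_Icc _ cm] by auto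
  have mper: "m (s + 2*pi) = m s" for s by (simp add: m_def dir_per hper)
  have mle: "m s \<le> m t" for s
    using per_reduce[of m s, OF mper] t(2) by force
  define M where "M = m t"
  have Mpos: "M > 0"
  proof -
    have "y$1 \<noteq> 0 \<or> y$2 \<noteq> 0" using y by (auto simp: vec2_eq)
    then have "\<exists>s. y \<bullet> dir s > 0"
    proof
      assume "y$1 \<noteq> 0"
      then show ?thesis
      proof (cases "y$1 > 0")
        case True then show ?thesis by (intro exI[of _ 0]) (simp add: inner_dir)
      next
        case False then show ?thesis using \<open>y$1 \<noteq> 0\<close> by (intro exI[of _ pi]) (simp add: inner_dir)
      qed
    next
      assume "y$2 \<noteq> 0"
      then show ?thesis
      proof (cases "y$2 > 0")
        case True then show ?thesis by (intro exI[of _ "pi/2"]) (simp add: inner_dir)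
      next
        case False
        have "cos (0 + 3*pi/2) = 0" "sin (0 + 3*pi/2) = -1" by (simp_all only: cos_shift) simp_all
        then show ?thesis using False \<open>y$2 \<noteq> 0\<close> by (intro exI[of _ "3*pi/2"]) (simp add: inner_dir)
      qed
    qed
    then obtain s where "y \<bullet> dir s > 0" by blast
    then have "m s > 0" using hpos[of s] by (simp add: m_def)
    then show ?thesis using mle[of s] by (simp add: M_def)
  qed
  define q where "q = (1/M) *\<^sub>R y"
  have qle: "q \<bullet> dir s \<le> h s" for s
  proof -
    have "(y \<bullet> dir s) / h s \<le> M" using mle[of s] by (simp add: m_def M_def)
    then have "y \<bullet> dir s \<le> M * h s" using hpos[of s] by (simp add: field_simps)
    then show ?thesis using Mpos by (simp add: q_def field_simps)
  qed
  have yt: "y \<bullet> dir t > 0" using Mpos hpos[of t] by (simp add: M_def m_def zero_less_divide_iff)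
  have qeq: "q \<bullet> dir t = h t" using yt hpos[of t] by (simp add: q_def M_def m_def)
  have qX: "q = X t" by (rule supp_unique[OF qle qeq])
  have yM: "y = M *\<^sub>R X t" using Mpos by (simp add: qX[symmetric] q_def)
  have M1: "M \<le> 1"
  proof -
    have "y \<bullet> dir t \<le> h t" using y supp_upper by blast
    then show ?thesis using hpos[of t] by (simp add: M_def m_def)
  qed
  define t' where "t' = (if t = 2*pi then 0 else t)"
  have Xt': "X t' = X t" using Xper[of 0] by (auto simp: t'_def)
  have "X2 M t' \<in> SS" using Mpos M1 t(1) by (auto simp: SS_def t'_def)
  moreover have "Phi (X2 M t') = y" by (simp add: Phi_def Xt' yM)
  ultimately show "y \<in> Phi ` SS" by force
qed

lemma Phi_image: "Phi ` SS = L - {0}" using Phi_sub Phi_sup by blast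

end

lemma cont_nth: "continuous_on S (\<lambda>v::real^'n. v$i)"
  by (rule linear_continuous_on[OF bounded_linear_vec_nth])

lemma cont_comp_nth: "continuous_on UNIV (k::real\<Rightarrow>real) \<Longrightarrow> continuous_on S (\<lambda>v::real^'n. k (v$i))"
  using continuous_on_compose2[of UNIV k S "\<lambda>v. v$i"] cont_nth by auto

lemma ex_2: "(\<exists>i::2. P i) \<longleftrightarrow> P 1 \<or> P 2"
  using forall_2[of "\<lambda>i. \<not> P i"] by blast

lemma int_x: "integral {0..1} (\<lambda>x::real. x) = 1/2"
  using ftc_int'[of 0 1 "\<lambda>x. x^2/2" "\<lambda>x. x"] by (auto intro!: derivative_eq_intros)

lemma fubini2:
  fixes k :: "real \<Rightarrow> real"
  assumes ck: "continuous_on UNIV k"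
  shows "((\<lambda>v::real^2. v$1 * k (v$2)) has_integral (1/2 * Ip k)) (cbox (X2 0 0) (X2 1 (2*pi)))"
proof -
  define f where "f p = fst p * k (snd p)" for p :: "real \<times> real"
  have cf: "continuous_on UNIV f" unfolding f_def
    using continuous_on_compose2[OF ck, of UNIV snd] continuous_on_snd[OF continuous_on_id]
    by (auto intro!: continuous_intros)
  have "integral (cbox (0,0) (1, 2*pi)) f = integral (cbox 0 1) (\<lambda>x. integral (cbox 0 (2*pi)) (\<lambda>y. f (x, y)))"
    by (rule integral_prod_continuous) (rule continuous_on_subset[OF cf], simp)
  also have "\<dots> = integral {0..1} (\<lambda>x. x * Ip k)"
    by (simp add: f_def)
  also have "\<dots> = 1/2 * Ip k" using int_x by simp
  finally have I: "integral (cbox (0,0) (1, 2*pi)) f = 1/2 * Ip k" .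
  have hf: "(f has_integral (1/2 * Ip k)) (cbox (0,0) (1, 2*pi))"
    using I integrable_continuous[OF continuous_on_subset[OF cf]] by (metis has_integral_integral subset_UNIV)
  define g where "g v = (v$1, v$2)" for v :: "real^2"
  define hh where "hh p = X2 (fst p) (snd p)" for p :: "real \<times> real"
  have gimg: "g ` cbox u v = cbox (u$1, u$2) (v$1, v$2)" for u v :: "real^2"
  proof
    show "g ` cbox u v \<subseteq> cbox (u$1, u$2) (v$1, v$2)"
      by (auto simp: g_def mem_box_cart cbox_Pair_eq)
    show "cbox (u$1, u$2) (v$1, v$2) \<subseteq> g ` cbox u v"
    proof
      fix p assume p: "p \<in> cbox (u$1, u$2) (v$1, v$2)"
      have "X2 (fst p) (snd p) \<in> cbox u v" using p
        by (auto simp: mem_box_cart cbox_Pair_eq forall_2 mem_Times_iff)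
      moreover have "p = g (X2 (fst p) (snd p))" by (simp add: g_def)
      ultimately show "p \<in> g ` cbox u v" by blast
    qed
  qed
  have himg: "hh ` cbox u v = cbox (X2 (fst u) (snd u)) (X2 (fst v) (snd v))" for u v :: "real \<times> real"
  proof
    show "hh ` cbox u v \<subseteq> cbox (X2 (fst u) (snd u)) (X2 (fst v) (snd v))"
      by (cases u, cases v) (auto simp: hh_def mem_box_cart cbox_Pair_eq forall_2 mem_Times_iff)
    show "cbox (X2 (fst u) (snd u)) (X2 (fst v) (snd v)) \<subseteq> hh ` cbox u v"
    proof
      fix x :: "real^2" assume x: "x \<in> cbox (X2 (fst u) (snd u)) (X2 (fst v) (snd v))"
      have "(x$1, x$2) \<in> cbox u v" using x
        by (cases u, cases v) (auto simp: mem_box_cart cbox_Pair_eq forall_2 mem_Times_iff)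
      moreover have "x = hh (x$1, x$2)" by (simp add: hh_def X2_eta)
      ultimately show "x \<in> hh ` cbox u v" by blast
    qed
  qed
  have cont: "measure lborel (g ` cbox u v) = 1 * measure lborel (cbox u v)" for u v :: "real^2"
  proof -
    have e: "cbox u v = {} \<longleftrightarrow> (v$1 < u$1 \<or> v$2 < u$2)"
      by (simp add: interval_eq_empty_cart ex_2)
    show ?thesis unfolding gimg content_Pair content_cbox_if_cart e
      by (auto simp: UNIV_2)
  qed
  have "((\<lambda>x. f (g x)) has_integral (1 / 1) *\<^sub>R (1/2 * Ip k)) (hh ` cbox (0,0) (1, 2*pi))"
  proof (rule has_integral_twiddle[of 1 hh g])
    show "hh (g x) = x" for x by (simp add: hh_def g_def X2_eta)
    show "g (hh x) = x" for x by (simp add: hh_def g_def)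
    show "continuous (at x) g" for x unfolding g_def by (intro continuous_intros)
    show "\<exists>w z. g ` cbox u v = cbox w z" for u v using gimg by blast
    show "\<exists>w z. hh ` cbox u v = cbox w z" for u v using himg by blast
    show "(0::real) < 1" by simp
    show "measure lborel (g ` cbox u v) = 1 * measure lborel (cbox u v)" for u v by (rule cont)
    show "(f has_integral (1/2 * Ip k)) (cbox (0,0) (1,2*pi))" by (rule hf)
  qed
  moreover have "hh ` cbox (0,0) (1, 2*pi) = cbox (X2 0 0) (X2 1 (2*pi))" by (simp add: himg)
  moreover have "(\<lambda>x. f (g x)) = (\<lambda>v::real^2. v$1 * k (v$2))" by (simp add: f_def g_def)
  ultimately show ?thesis by simp
qed

lemma borel_lebesgue: "A \<in> sets borel \<Longrightarrow> A \<in> sets lebesgue"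
  by (simp add: sets_completionI_sets)

context cb
begin

definition x1d where "x1d t = - (h2 t + h t) * sin t"
definition x2d where "x2d t = (h2 t + h t) * cos t"

definition Pd :: "real^2 \<Rightarrow> real^2 \<Rightarrow> real^2" where
  "Pd v w = X2 (w$1 * x1 (v$2) + v$1 * (w$2 * x1d (v$2))) (w$1 * x2 (v$2) + v$1 * (w$2 * x2d (v$2)))"

lemma Phi_eq: "Phi = (\<lambda>v. (v$1 * x1 (v$2)) *\<^sub>R X2 1 0 + (v$1 * x2 (v$2)) *\<^sub>R X2 0 1)"
  by (rule ext) (simp add: Phi_def X_def vec2_eq)

lemma Phi_deriv: "(Phi has_derivative Pd v) (at v within S)"
proof -
  have dA: "((\<lambda>v::real^2. v$i) has_derivative (\<lambda>w. w$i)) (at v within S)" for i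
    by (rule bounded_linear_imp_has_derivative[OF bounded_linear_vec_nth])
  have dB1: "((\<lambda>v. x1 (v$2)) has_derivative (\<lambda>w. w$2 * x1d (v$2))) (at v within S)"
    using DERIV_compose_FDERIV[OF dx1 dA[of 2]] by (simp add: x1d_def)
  have dB2: "((\<lambda>v. x2 (v$2)) has_derivative (\<lambda>w. w$2 * x2d (v$2))) (at v within S)"
    using DERIV_compose_FDERIV[OF dx2 dA[of 2]] by (simp add: x2d_def)
  have g1: "((\<lambda>v. v$1 * x1 (v$2)) has_derivative (\<lambda>w. v$1 * (w$2 * x1d (v$2)) + w$1 * x1 (v$2))) (at v within S)"
    by (rule has_derivative_mult[OF dA[of 1] dB1])
  have g2: "((\<lambda>v. v$1 * x2 (v$2)) has_derivative (\<lambda>w. v$1 * (w$2 * x2d (v$2)) + w$1 * x2 (v$2))) (at v within S)"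
    by (rule has_derivative_mult[OF dA[of 1] dB2])
  have "((\<lambda>v. (v$1 * x1 (v$2)) *\<^sub>R X2 1 0 + (v$1 * x2 (v$2)) *\<^sub>R X2 0 1) has_derivative
      (\<lambda>w. (v$1 * (w$2 * x1d (v$2)) + w$1 * x1 (v$2)) *\<^sub>R X2 1 0 + (v$1 * (w$2 * x2d (v$2)) + w$1 * x2 (v$2)) *\<^sub>R X2 0 1)) (at v within S)"
    by (intro has_derivative_add has_derivative_scaleR_left g1 g2)
  moreover have "(\<lambda>w. (v$1 * (w$2 * x1d (v$2)) + w$1 * x1 (v$2)) *\<^sub>R X2 1 0 + (v$1 * (w$2 * x2d (v$2)) + w$1 * x2 (v$2)) *\<^sub>R X2 0 1) = Pd v"
    by (rule ext) (simp add: Pd_def vec2_eq algebra_simps)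
  ultimately show ?thesis unfolding Phi_eq by simp
qed

lemma det_Pd: "det (matrix (Pd v)) = v$1 * ((h2 (v$2) + h (v$2)) * h (v$2))"
proof -
  have a: "(axis 1 1 :: real^2) $ 1 = 1" "(axis 1 1 :: real^2) $ 2 = 0" "(axis 2 1 :: real^2) $ 1 = 0" "(axis 2 1 :: real^2) $ 2 = 1"
    by (simp_all add: axis_def)
  have "det (matrix (Pd v)) = x1 (v$2) * (v$1 * x2d (v$2)) - v$1 * x1d (v$2) * x2 (v$2)"
    by (simp add: det_2 matrix_def Pd_def a)
  also have "\<dots> = v$1 * ((h2 (v$2) + h (v$2)) * (x1 (v$2) * cos (v$2) + x2 (v$2) * sin (v$2)))"
    by (simp add: x1d_def x2d_def algebra_simps)
  also have "x1 (v$2) * cos (v$2) + x2 (v$2) * sin (v$2) = h (v$2)"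
    using X_dir[of "v$2"] by (simp add: X_def inner_dir)
  finally show ?thesis .
qed

lemma SS_leb: "SS \<in> sets lebesgue"
proof -
  have "SS = {v. 0 < v$1} \<inter> {v. v$1 \<le> 1} \<inter> {v. 0 \<le> v$2} \<inter> {v::real^2. v$2 < 2*pi}"
    by (auto simp: SS_def)
  moreover have "open {v::real^2. 0 < v$1}" "closed {v::real^2. v$1 \<le> 1}" "closed {v::real^2. 0 \<le> v$2}"
    "open {v::real^2. v$2 < 2*pi}"
    by (intro open_Collect_less closed_Collect_le continuous_on_const cont_nth)+
  ultimately show ?thesis
    by (metis borel_closed borel_open borel_lebesgue sets.Int)
qed

definition kk where "kk t = (h2 t + h t) * h t"

lemma kk_cont: "continuous_on UNIV kk"
  unfolding kk_def using C2w_cont0[OF hC] C2w_cont2[OF hC] by (auto intro!: continuous_intros)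

lemma int_SS: "((\<lambda>v. \<bar>det (matrix (Pd v))\<bar>) has_integral (1/2 * Ip kk)) SS"
proof -
  define B where "B = cbox (X2 0 0) (X2 1 (2*pi))"
  have hB: "((\<lambda>v::real^2. v$1 * kk (v$2)) has_integral (1/2 * Ip kk)) B"
    unfolding B_def by (rule fubini2[OF kk_cont])
  have n1: "negligible {v::real^2. v$1 = 0}" by (rule negligible_standard_hyperplane_cart)
  have n2: "negligible {v::real^2. v$2 = 2*pi}"
    using negligible_standard_hyperplane[of "axis 2 (1::real)" "2*pi"] by (simp add: cart_eq_inner_axis)
  have sub: "{x \<in> B - SS. x$1 * kk (x$2) \<noteq> 0} \<subseteq> {v::real^2. v$1 = 0} \<union> {v::real^2. v$2 = 2*pi}"
    by (auto simp: B_def SS_def mem_box_cart forall_2)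
  have sub2: "{x \<in> SS - B. x$1 * kk (x$2) \<noteq> 0} = {}"
    by (auto simp: B_def SS_def mem_box_cart forall_2)
  have "((\<lambda>v::real^2. v$1 * kk (v$2)) has_integral (1/2 * Ip kk)) SS"
  proof -
    have nA: "negligible {x \<in> SS - B. x$1 * kk (x$2) \<noteq> 0}" unfolding sub2 by simp
    have nB: "negligible {x \<in> B - SS. x$1 * kk (x$2) \<noteq> 0}"
      by (rule negligible_subset[OF negligible_Un[OF n1 n2] sub])
    show ?thesis using has_integral_spike_set_eq[OF nA nB] hB by blast
  qed
  moreover have "v$1 * kk (v$2) = \<bar>det (matrix (Pd v))\<bar>" if "v \<in> SS" for v
  proof -
    have "v$1 * kk (v$2) > 0" using that hpos[of "v$2"] Dpos'[of "v$2"] by (simp add: SS_def kk_def)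
    then show ?thesis by (simp add: det_Pd kk_def)
  qed
  ultimately show ?thesis by (rule has_integral_eq[rotated])
qed

lemma area_formula: "area L = Bf h h / 2"
proof -
  have "Phi ` SS \<in> lmeasurable \<and> measure lebesgue (Phi ` SS) = 1/2 * Ip kk"
    using has_measure_differentiable_image[OF SS_leb Phi_deriv Phi_inj] int_SS by blast
  then have m: "measure lebesgue (L - {0}) = 1/2 * Ip kk" by (simp add: Phi_image)
  have "L \<in> sets lebesgue" using lmeasurable_compact[OF cpt] by blast
  moreover have "{0} \<in> null_sets lebesgue" using negligible_iff_null_sets negligible_sing by blast
  ultimately have "measure lebesgue (L - {0}) = measure lebesgue L" by (rule measure_Diff_null_set)
  moreover have "Ip kk = Bf h h" unfolding Bf_def kk_def Dh by (simp add: mult.commute)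
  ultimately show ?thesis using m by (simp add: area_def)
qed

end

definition msum :: "(real^2) set \<Rightarrow> (real^2) set \<Rightarrow> (real^2) set" where
  "msum K L = {x + y | x y. x \<in> K \<and> y \<in> L}"

lemma supp_msum:
  assumes "cb K" "cb L"
  shows "supp (msum K L) t = supp K t + supp L t"
proof -
  interpret K: cb K by fact
  interpret L: cb L by fact
  obtain p where p: "p \<in> K" "p \<bullet> dir t = supp K t" using K.supp_attained by blast
  obtain q where q: "q \<in> L" "q \<bullet> dir t = supp L t" using L.supp_attained by blast
  show ?thesis unfolding supp_def[of "msum K L"]
  proof (rule cSup_eq_maximum)
    show "supp K t + supp L t \<in> (\<lambda>x. x \<bullet> dir t) ` msum K L"
      using p q by (auto simp: msum_def inner_add_left intro!: image_eqI[of _ _ "p + q"])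
    show "x \<le> supp K t + supp L t" if "x \<in> (\<lambda>x. x \<bullet> dir t) ` msum K L" for x
      using that K.supp_upper L.supp_upper by (force simp: msum_def inner_add_left intro: add_mono)
  qed
qed

lemma cb_msum:
  assumes "cb K" "cb L"
  shows "cb (msum K L)"
proof -
  interpret K: cb K by fact
  interpret L: cb L by fact
  have s: "supp (msum K L) = (\<lambda>t. supp K t + supp L t)" using supp_msum[OF assms] by auto
  have C: "C2w (supp (msum K L)) (\<lambda>t. K.h1 t + L.h1 t) (\<lambda>t. K.h2 t + L.h2 t)"
    unfolding s by (rule C2w_add[OF K.hC L.hC])
  show ?thesis
  proof
    show "compact (msum K L)" unfolding msum_def by (rule compact_sums[OF K.cpt L.cpt])
    have "msum K L = (\<Union>x\<in>K. \<Union>y\<in>L. {x + y})" by (auto simp: msum_def)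
    then show "convex (msum K L)" using convex_sums[OF K.cvx L.cvx] by simp
    have "K \<subseteq> msum K L" using L.zero_in by (force simp: msum_def)
    then show "0 \<in> interior (msum K L)" using K.int0 interior_mono by blast
    show "C2_circle (supp (msum K L))" by (rule C2w_C2[OF C])
    show "D2 (supp (msum K L)) t > 0" for t
      using C2w_D2[OF C, of t] s K.Dpos'[of t] L.Dpos'[of t] by simp
  qed
qed

lemma Ip_pos:
  assumes c: "continuous_on UNIV f" and nn: "\<And>t. f t \<ge> 0" and t0: "t0 \<in> {0<..<2*pi}" and p: "f t0 > 0"
  shows "Ip f > 0"
proof -
  have i: "(f has_integral Ip f) {0..2*pi}" using int_cont[OF c] by (rule integrable_integral)
  have ge: "Ip f \<ge> 0" using int_cont[OF c] nn by (rule integral_nonneg)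
  show ?thesis
  proof (rule ccontr)
    assume "\<not> ?thesis"
    then have "Ip f = 0" using ge by simp
    then have "(f has_integral 0) (cbox 0 (2*pi))" using i by simp
    then have h0: "(f has_integral 0) (cbox 0 (2*pi))" .
    have "f t0 = 0"
      apply (rule has_integral_0_cbox_imp_0[where a=0 and b="2*pi" and f=f])
      using c apply (rule continuous_on_subset) apply simp
      using nn apply simp
      using h0 apply simp
       apply simp
      using t0 by auto
    then show False using p by simp
  qed
qed

lemma discr:
  fixes A B C :: real
  assumes "\<And>s. 0 \<le> s^2 * A - 2 * s * B + C" and A: "A \<ge> 0"
  shows "B^2 \<le> A * C"
proof (cases "A = 0")
  case True
  show ?thesis
  proof (rule ccontr)
    assume "\<not> ?thesis"
    then have "B \<noteq> 0" using True by simp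
    then show False using assms(1)[of "(C + 1) / (2 * B)"] True by (simp add: field_simps)
  qed
next
  case False
  then have Ap: "A > 0" using A by simp
  have "0 \<le> (B/A)^2 * A - 2 * (B/A) * B + C" by (rule assms(1))
  also have "\<dots> = C - B^2 / A" using Ap by (simp add: field_simps power2_eq_square)
  finally show ?thesis using Ap by (simp add: field_simps)
qed

lemma CSw:
  assumes cF: "continuous_on UNIV F" and cG: "continuous_on UNIV G" and cw: "continuous_on UNIV w"
    and wp: "\<And>t. w t > 0"
  shows "(Ip (\<lambda>t. F t * G t))^2 \<le> Ip (\<lambda>t. (F t)^2 * w t) * Ip (\<lambda>t. (G t)^2 / w t)"
proof (rule discr)
  have wn: "w t \<noteq> 0" for t using wp[of t] by simp
  have ci: "continuous_on UNIV (\<lambda>t. (G t)^2 / w t)" using cG cw wn by (auto intro!: continuous_intros)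
  fix s :: real
  have "0 \<le> Ip (\<lambda>t. (s * F t * w t - G t)^2 / w t)"
    by (rule integral_nonneg) (use cF cG cw wn wp in \<open>auto intro!: int_cont continuous_intros divide_nonneg_pos\<close>)
  also have "Ip (\<lambda>t. (s * F t * w t - G t)^2 / w t) = Ip (\<lambda>t. (s^2 * ((F t)^2 * w t) - 2 * s * (F t * G t)) + (G t)^2 / w t)"
    by (rule arg_cong[where f=Ip], rule ext) (simp add: wn field_simps power2_eq_square)
  also have "\<dots> = s^2 * Ip (\<lambda>t. (F t)^2 * w t) - 2 * s * Ip (\<lambda>t. F t * G t) + Ip (\<lambda>t. (G t)^2 / w t)"
    using cF cG cw ci
    by (subst Ip_add, (auto intro!: continuous_intros)[2], subst Ip_diff, (auto intro!: continuous_intros)[2]) simp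
  finally show "0 \<le> s^2 * Ip (\<lambda>t. (F t)^2 * w t) - 2 * s * Ip (\<lambda>t. F t * G t) + Ip (\<lambda>t. (G t)^2 / w t)" .
next
  show "0 \<le> Ip (\<lambda>t. (F t)^2 * w t)"
    by (rule integral_nonneg) (use cF cw less_imp_le[OF wp] in \<open>auto intro!: int_cont continuous_intros mult_nonneg_nonneg\<close>)
qed

lemma C2w_contD: assumes "C2w f f1 f2"
  shows "continuous_on UNIV f" "continuous_on UNIV f1" "continuous_on UNIV f2" "continuous_on UNIV (D2 f)"
  using C2w_cont0[OF assms] C2w_cont1[OF assms] C2w_cont2[OF assms] C2w_D2[OF assms]
  by (auto intro!: continuous_intros)

lemma Bf_lin_left:
  assumes "C2w f f1 f2" "C2w g g1 g2" "C2w p p1 p2"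
  shows "Bf (\<lambda>t. a * f t + b * g t) p = a * Bf f p + b * Bf g p"
proof -
  note c = C2w_contD[OF assms(1)] C2w_contD[OF assms(2)] C2w_contD[OF assms(3)]
  have "Bf (\<lambda>t. a * f t + b * g t) p = Ip (\<lambda>t. a * (f t * D2 p t) + b * (g t * D2 p t))"
    unfolding Bf_def by (simp add: algebra_simps)
  also have "\<dots> = a * Bf f p + b * Bf g p"
    unfolding Bf_def using c by (subst Ip_add) (auto intro!: continuous_intros)
  finally show ?thesis .
qed

lemma D2_lin:
  assumes "C2w f f1 f2" "C2w g g1 g2"
  shows "D2 (\<lambda>t. a * f t + b * g t) t = a * D2 f t + b * D2 g t"
proof -
  have "C2w (\<lambda>t. a * f t + b * g t) (\<lambda>t. a * f1 t + b * g1 t) (\<lambda>t. a * f2 t + b * g2 t)"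
    by (intro C2w_add C2w_cmult assms)
  then show ?thesis using C2w_D2[OF assms(1)] C2w_D2[OF assms(2)] C2w_D2 by (simp add: algebra_simps)
qed

lemma Bf_lin_right:
  assumes "C2w f f1 f2" "C2w g g1 g2" "C2w p p1 p2"
  shows "Bf p (\<lambda>t. a * f t + b * g t) = a * Bf p f + b * Bf p g"
proof -
  have C: "C2w (\<lambda>t. a * f t + b * g t) (\<lambda>t. a * f1 t + b * g1 t) (\<lambda>t. a * f2 t + b * g2 t)"
    by (intro C2w_add C2w_cmult assms)
  show ?thesis
    using Bf_sym[OF assms(3) C] Bf_lin_left[OF assms, of a b] Bf_sym[OF assms(1,3)] Bf_sym[OF assms(2,3)]
    by simp
qed

lemma Ip_lin4:
  assumes "continuous_on UNIV A" "continuous_on UNIV B" "continuous_on UNIV C" "continuous_on UNIV D"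
  shows "Ip (\<lambda>t. A t - a * B t - b * C t - c * D t) = Ip A - a * Ip B - b * Ip C - c * Ip D"
  using assms
  by (subst Ip_diff, (auto intro!: continuous_intros)[2], subst Ip_diff, (auto intro!: continuous_intros)[2],
      subst Ip_diff, (auto intro!: continuous_intros)[2]) simp

lemma alg_final:
  fixes A0 A1 A2 :: real
  assumes "A0 \<ge> 0" "A1^2 \<le> A0 * A2" "4 * A0 \<le> A1" "A2 \<ge> 0"
  shows "A2 - 5 * A1 + 4 * A0 \<ge> 0"
proof (cases "A0 = 0")
  case True
  then have "A1 = 0" using assms by simp
  then show ?thesis using True assms by simp
next
  case False
  then have A0: "A0 > 0" using assms by simp
  have "(A1 - A0) * (A1 - 4 * A0) \<ge> 0" using assms A0 by (intro mult_nonneg_nonneg) auto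
  then have "A0 * (A2 - 5 * A1 + 4 * A0) \<ge> 0" using assms(2)
    by (simp add: algebra_simps power2_eq_square)
  then show ?thesis using A0 by (simp add: zero_le_mult_iff)
qed

context cb
begin

lemma second_ineq:
  "(1/2) * bd_integral L (\<lambda>t. 1 / curv L t) - area L \<ge> 4 * ((perimeter L)^2 / (4*pi) - area L)"
proof -
  note hc = C2w_contD[OF hC]
  define a0 where "a0 = Ip h / (2*pi)"
  define al where "al = Ip (\<lambda>t. h t * cos t) / pi"
  define be where "be = Ip (\<lambda>t. h t * sin t) / pi"
  define m where "m t = al * cos t + be * sin t" for t
  define m1 where "m1 t = - al * sin t + be * cos t" for t
  define m2 where "m2 t = - al * cos t - be * sin t" for t
  have mC: "C2w m m1 m2"
    unfolding C2w_def m_def[abs_def] m1_def[abs_def] m2_def[abs_def]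
    by (auto intro!: derivative_eq_intros continuous_intros)
  define g where "g t = h t - a0 - m t" for t
  define g1 where "g1 t = h1 t - m1 t" for t
  define g2 where "g2 t = h2 t - m2 t" for t
  have gC: "C2w g g1 g2"
    unfolding g_def[abs_def] g1_def[abs_def] g2_def[abs_def]
    using C2w_diff[OF C2w_diff[OF hC C2w_const[of a0]] mC] by simp
  note gc = C2w_contD[OF gC]
  have c1: "continuous_on UNIV (cos::real\<Rightarrow>real)" by (intro continuous_at_imp_continuous_on ballI isCont_cos)
  have c2: "continuous_on UNIV (sin::real\<Rightarrow>real)" by (intro continuous_at_imp_continuous_on ballI isCont_sin)
  have cc: "continuous_on UNIV (cos::real\<Rightarrow>real)" "continuous_on UNIV (sin::real\<Rightarrow>real)"
    "continuous_on UNIV (\<lambda>t::real. (cos t)^2)" "continuous_on UNIV (\<lambda>t::real. (sin t)^2)"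
    "continuous_on UNIV (\<lambda>t::real. sin t * cos t)" "continuous_on UNIV (\<lambda>t::real. 1::real)"
    using c1 c2 by (auto intro!: continuous_intros)
  have g0: "Ip g = 0"
  proof -
    have "Ip g = Ip (\<lambda>t. h t - a0 * 1 - al * cos t - be * sin t)"
      by (simp add: g_def[abs_def] m_def algebra_simps)
    also have "\<dots> = Ip h - a0 * Ip (\<lambda>t. 1) - al * Ip cos - be * Ip sin"
      by (rule Ip_lin4) (use hc cc in auto)
    finally show ?thesis by (simp add: a0_def Ip_cos Ip_sin)
  qed
  have gcos: "Ip (\<lambda>t. g t * cos t) = 0"
  proof -
    have "Ip (\<lambda>t. g t * cos t) = Ip (\<lambda>t. h t * cos t - a0 * cos t - al * (cos t)^2 - be * (sin t * cos t))"
      by (simp add: g_def m_def algebra_simps power2_eq_square)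
    also have "\<dots> = Ip (\<lambda>t. h t * cos t) - a0 * Ip cos - al * Ip (\<lambda>t. (cos t)^2) - be * Ip (\<lambda>t. sin t * cos t)"
      by (rule Ip_lin4) (use hc cc in \<open>auto intro!: continuous_intros\<close>)
    finally show ?thesis by (simp add: al_def Ip_cos Ip_cos2 Ip_sincos)
  qed
  have gsin: "Ip (\<lambda>t. g t * sin t) = 0"
  proof -
    have "Ip (\<lambda>t. g t * sin t) = Ip (\<lambda>t. h t * sin t - a0 * sin t - al * (sin t * cos t) - be * (sin t)^2)"
      by (simp add: g_def m_def algebra_simps power2_eq_square)
    also have "\<dots> = Ip (\<lambda>t. h t * sin t) - a0 * Ip sin - al * Ip (\<lambda>t. sin t * cos t) - be * Ip (\<lambda>t. (sin t)^2)"
      by (rule Ip_lin4) (use hc cc in \<open>auto intro!: continuous_intros\<close>)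
    finally show ?thesis by (simp add: be_def Ip_sin Ip_sin2 Ip_sincos)
  qed
  have Dg: "D2 g t = D2 h t - a0" for t
    using C2w_D2[OF gC, of t] Dh[of t] by (simp add: g_def g2_def m_def m2_def)
  have Ig2: "Ip g2 = 0" using parts[OF C2w_const[of 1] gC] by simp
  have IDg: "Ip (D2 g) = 0"
    unfolding C2w_D2[OF gC] using gc g0 Ig2 by (subst Ip_add) auto
  define A0 where "A0 = Ip (\<lambda>t. (g t)^2)"
  define A1 where "A1 = Ip (\<lambda>t. (g1 t)^2)"
  define A2 where "A2 = Ip (\<lambda>t. (g2 t)^2)"
  have Bgg: "Bf g g = A0 - A1" unfolding A0_def A1_def by (rule Bf_self[OF gC])
  have Igg2: "Ip (\<lambda>t. g t * g2 t) = - A1"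
    using parts[OF gC gC] by (simp add: A1_def power2_eq_square)
  have IDg2: "Ip (\<lambda>t. (D2 g t)^2) = A2 - 2 * A1 + A0"
  proof -
    have "Ip (\<lambda>t. (D2 g t)^2) = Ip (\<lambda>t. ((g2 t)^2 + 2 * (g t * g2 t)) + (g t)^2)"
      unfolding C2w_D2[OF gC] by (simp add: power2_eq_square algebra_simps)
    also have "\<dots> = A2 + 2 * Ip (\<lambda>t. g t * g2 t) + A0"
      unfolding A0_def A2_def using gc
      by (subst Ip_add, (auto intro!: continuous_intros)[2], subst Ip_add, (auto intro!: continuous_intros)[2]) simp
    finally show ?thesis using Igg2 by simp
  qed
  have Ih: "Ip h = 2 * pi * a0" by (simp add: a0_def)
  have IDh: "Ip (D2 h) = 2 * pi * a0"
  proof -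
    have "Ip (D2 h) = Ip (\<lambda>t. D2 g t + a0)" by (simp add: Dg)
    also have "\<dots> = Ip (D2 g) + Ip (\<lambda>t. a0)" using gc by (subst Ip_add) (auto intro!: continuous_intros)
    finally show ?thesis using IDg by simp
  qed
  have IDh2: "Ip (\<lambda>t. (D2 h t)^2) = 2 * pi * a0^2 + A2 - 2 * A1 + A0"
  proof -
    have "Ip (\<lambda>t. (D2 h t)^2) = Ip (\<lambda>t. ((D2 g t)^2 + 2 * a0 * D2 g t) + a0^2)"
      by (simp add: Dg power2_eq_square algebra_simps)
    also have "\<dots> = Ip (\<lambda>t. (D2 g t)^2) + 2 * a0 * Ip (D2 g) + 2 * pi * a0^2"
      using gc
      by (subst Ip_add, (auto intro!: continuous_intros)[2], subst Ip_add, (auto intro!: continuous_intros)[2]) simp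
    finally show ?thesis using IDg IDg2 by simp
  qed
  have Bhh: "Bf h h = 2 * pi * a0^2 + Bf g g"
  proof -
    have "Bf h h = Ip (\<lambda>t. a0 * h t + h t * D2 g t)"
      unfolding Bf_def by (simp add: Dg algebra_simps)
    also have "\<dots> = a0 * Ip h + Bf h g"
      unfolding Bf_def using hc gc by (subst Ip_add) (auto intro!: continuous_intros)
    also have "Bf h g = Bf g h" by (rule Bf_sym[OF hC gC])
    also have "Bf g h = Ip (\<lambda>t. a0 * g t + g t * D2 g t)"
      unfolding Bf_def by (simp add: Dg algebra_simps)
    also have "\<dots> = a0 * Ip g + Bf g g"
      unfolding Bf_def using gc by (subst Ip_add) (auto intro!: continuous_intros)
    finally show ?thesis using g0 Ih by (simp add: power2_eq_square)
  qed
  have bd: "bd_integral L (\<lambda>t. 1 / curv L t) = Ip (\<lambda>t. (D2 h t)^2)"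
    unfolding bd_integral_def curv_def by (simp add: power2_eq_square)
  have per: "perimeter L = 2 * pi * a0"
    unfolding perimeter_def bd_integral_def using IDh by simp
  have cs: "A1^2 \<le> A0 * A2"
    using CSw[OF gc(1) gc(3) continuous_on_const[of UNIV 1]] Igg2 by (simp add: A0_def A2_def)
  have w2: "4 * A0 \<le> A1" unfolding A0_def A1_def by (rule wirt2[OF gC g0 gcos gsin])
  have A0p: "A0 \<ge> 0" unfolding A0_def by (rule integral_nonneg) (use gc in \<open>auto intro!: int_cont continuous_intros\<close>)
  have A2p: "A2 \<ge> 0" unfolding A2_def by (rule integral_nonneg) (use gc in \<open>auto intro!: int_cont continuous_intros\<close>)
  have fin: "A2 - 5 * A1 + 4 * A0 \<ge> 0" by (rule alg_final[OF A0p cs w2 A2p])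
  show ?thesis
    unfolding bd IDh2 area_formula Bhh Bgg per using fin
    by (simp add: power2_eq_square field_simps)
qed

end

lemma Ip_lin3:
  assumes "continuous_on UNIV A" "continuous_on UNIV B" "continuous_on UNIV C"
  shows "Ip (\<lambda>t. a * A t + b * B t + c * C t) = a * Ip A + b * Ip B + c * Ip C"
  using assms
  by (subst Ip_add, (auto intro!: continuous_intros)[2], subst Ip_add, (auto intro!: continuous_intros)[2]) simp

context cb
begin

definition om where "om t = D2 h t / h t"

lemma Dh_pos: "D2 h t > 0" using Dpos'[of t] Dh[of t] by simp

lemma om_pos: "om t > 0" using Dh_pos[of t] hpos[of t] by (simp add: om_def)

lemma om_cont: "continuous_on UNIV om"
  using C2w_contD[OF hC] hpos unfolding om_def
  by (auto intro!: continuous_intros simp: less_imp_neq[symmetric])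

lemma h_om: "h t * om t = D2 h t" using hpos[of t] by (simp add: om_def)

lemma Ip_h_pos: "Ip h > 0"
  by (rule Ip_pos[of _ pi]) (use C2w_contD[OF hC] hpos less_imp_le in auto)

lemma Bhh_nonneg: "Bf h h \<ge> 0"
  unfolding Bf_def
  by (rule integral_nonneg) (use C2w_contD[OF hC] hpos Dh_pos in \<open>auto intro!: int_cont continuous_intros less_imp_le\<close>)

lemma Bhh_pos: "Bf h h > 0"
  unfolding Bf_def
  by (rule Ip_pos[of _ pi]) (use C2w_contD[OF hC] hpos Dh_pos in \<open>auto intro!: continuous_intros less_imp_le\<close>)

lemma Qform:
  assumes zC: "C2w z z1 z2"
  shows "dV_integral L (\<lambda>t. z t * (- L_op L z t)) =
      (Ip (\<lambda>t. (z t * h t)^2 * om t) - Bf (\<lambda>t. z t * h t) (\<lambda>t. z t * h t)) / 2"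
    and "dV_integral L (\<lambda>t. (z t)^2) = Ip (\<lambda>t. (z t * h t)^2 * om t) / 2"
proof -
  define f where "f t = z t * h t" for t
  have fC: "C2w f (\<lambda>t. z1 t * h t + z t * h1 t) (\<lambda>t. z2 t * h t + 2 * z1 t * h1 t + z t * h2 t)"
    unfolding f_def[abs_def] by (rule C2w_mult[OF zC hC])
  note fc = C2w_contD[OF fC]
  have ne: "h t \<noteq> 0" "D2 h t \<noteq> 0" for t using hpos[of t] Dh_pos[of t] by auto
  have "dV_integral L (\<lambda>t. z t * (- L_op L z t)) = Ip (\<lambda>t. (1/2) * ((f t)^2 * om t) - (1/2) * (f t * D2 f t))"
    unfolding dV_integral_def L_op_def f_def[symmetric]
    by (rule arg_cong[where f=Ip], rule ext) (simp add: f_def om_def ne field_simps power2_eq_square)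
  also have "\<dots> = (1/2) * Ip (\<lambda>t. (f t)^2 * om t) - (1/2) * Ip (\<lambda>t. f t * D2 f t)"
    using fc om_cont by (subst Ip_diff) (auto intro!: continuous_intros)
  finally show "dV_integral L (\<lambda>t. z t * (- L_op L z t)) =
      (Ip (\<lambda>t. (z t * h t)^2 * om t) - Bf (\<lambda>t. z t * h t) (\<lambda>t. z t * h t)) / 2"
    unfolding Bf_def f_def[symmetric] by simp
  have "dV_integral L (\<lambda>t. (z t)^2) = Ip (\<lambda>t. (1/2) * ((f t)^2 * om t))"
    unfolding dV_integral_def
    by (rule arg_cong[where f=Ip], rule ext) (simp add: f_def om_def ne field_simps power2_eq_square)
  then show "dV_integral L (\<lambda>t. (z t)^2) = Ip (\<lambda>t. (z t * h t)^2 * om t) / 2"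
    by (simp add: f_def)
qed

lemma dV_lin: "dV_integral L z = Bf (\<lambda>t. z t * h t) h / 2"
  unfolding dV_integral_def Bf_def by (simp add: algebra_simps)

lemma adm_nonneg:
  assumes zC: "C2_circle z" and z0: "dV_integral L z = 0"
  shows "0 \<le> dV_integral L (\<lambda>t. z t * (- L_op L z t)) / dV_integral L (\<lambda>t. (z t)^2)"
proof -
  have zC': "C2w z (deriv z) (deriv (deriv z))" by (rule C2_C2w[OF zC])
  define f where "f t = z t * h t" for t
  have fC: "C2w f (\<lambda>t. deriv z t * h t + z t * h1 t) (\<lambda>t. deriv (deriv z) t * h t + 2 * deriv z t * h1 t + z t * h2 t)"
    unfolding f_def[abs_def] by (rule C2w_mult[OF zC' hC])
  have "Bf f h = 0" using z0 dV_lin[of z] by (simp add: f_def[abs_def])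
  then have Bff: "Bf f f \<le> 0" by (rule minkowski[OF hC fC Ip_h_pos Bhh_nonneg])
  have I: "Ip (\<lambda>t. (f t)^2 * om t) \<ge> 0"
    by (rule integral_nonneg) (use C2w_contD[OF fC] om_cont less_imp_le[OF om_pos] in \<open>auto intro!: int_cont continuous_intros mult_nonneg_nonneg\<close>)
  show ?thesis using Qform[OF zC'] Bff I by (simp add: f_def[abs_def])
qed

lemma lambda2_bdd: "bdd_below { dV_integral L (\<lambda>t. z t * (- L_op L z t)) / dV_integral L (\<lambda>t. (z t)^2)
      | z. C2_circle z \<and> (\<exists>t. z t \<noteq> 0) \<and> dV_integral L z = 0
           \<and> (\<forall>v. dV_integral L (\<lambda>t. z t * ell L v t) = 0) }"
proof (rule bdd_belowI[of _ 0])
  fix x assume "x \<in> { dV_integral L (\<lambda>t. z t * (- L_op L z t)) / dV_integral L (\<lambda>t. (z t)^2)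
      | z. C2_circle z \<and> (\<exists>t. z t \<noteq> 0) \<and> dV_integral L z = 0
           \<and> (\<forall>v. dV_integral L (\<lambda>t. z t * ell L v t) = 0) }"
  then obtain z where "x = dV_integral L (\<lambda>t. z t * (- L_op L z t)) / dV_integral L (\<lambda>t. (z t)^2)"
    "C2_circle z" "dV_integral L z = 0" by blast
  then show "0 \<le> x" using adm_nonneg by blast
qed

end

lemma Ip_lin3m:
  assumes "continuous_on UNIV A" "continuous_on UNIV B" "continuous_on UNIV C"
  shows "Ip (\<lambda>t. A t - b * B t - c * C t) = Ip A - b * Ip B - c * Ip C"
  using assms
  by (subst Ip_diff, (auto intro!: continuous_intros)[2], subst Ip_diff, (auto intro!: continuous_intros)[2]) simp

lemma cos_sin_cont: "continuous_on UNIV (cos::real\<Rightarrow>real)" "continuous_on UNIV (sin::real\<Rightarrow>real)"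
  by (intro continuous_at_imp_continuous_on ballI isCont_cos isCont_sin)+

lemma cramer:
  fixes a11 a12 a22 b1 b2 d :: real
  assumes d: "d = a11*a22 - a12^2" "d \<noteq> 0"
  shows "(b1*a22 - b2*a12)/d * a11 + (a11*b2 - a12*b1)/d * a12 = b1"
    and "(b1*a22 - b2*a12)/d * a12 + (a11*b2 - a12*b1)/d * a22 = b2"
proof -
  have e1: "(b1*a22 - b2*a12) * a11 + (a11*b2 - a12*b1) * a12 = b1 * d"
    by (simp add: d(1) power2_eq_square algebra_simps)
  have e2: "(b1*a22 - b2*a12) * a12 + (a11*b2 - a12*b1) * a22 = b2 * d"
    by (simp add: d(1) power2_eq_square algebra_simps)
  have "(b1*a22 - b2*a12)/d * a11 + (a11*b2 - a12*b1)/d * a12 = ((b1*a22 - b2*a12) * a11 + (a11*b2 - a12*b1) * a12) / d"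
    by (simp only: times_divide_eq_left add_divide_distrib)
  then show "(b1*a22 - b2*a12)/d * a11 + (a11*b2 - a12*b1)/d * a12 = b1" using e1 d(2) by simp
  have "(b1*a22 - b2*a12)/d * a12 + (a11*b2 - a12*b1)/d * a22 = ((b1*a22 - b2*a12) * a12 + (a11*b2 - a12*b1) * a22) / d"
    by (simp only: times_divide_eq_left add_divide_distrib)
  then show "(b1*a22 - b2*a12)/d * a12 + (a11*b2 - a12*b1)/d * a22 = b2" using e2 d(2) by simp
qed

lemma mixed_msum: "mixed_area K L = (area (msum K L) - area K - area L) / 2"
  by (simp add: mixed_area_def msum_def)

lemma first_ineq:
  assumes cK: "cb K" and cL: "cb L"
  shows "lambda2 K * ((mixed_area K L)^2 / area K - area L)
           \<le> (1/2) * bd_integral L (\<lambda>t. (1 / rel_curv L K t) * supp K t) - area L"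
proof -
  interpret K: cb K by fact
  interpret L: cb L by fact
  note kC = K.hC and lC = L.hC
  note kc = C2w_contD[OF kC] and lc = C2w_contD[OF lC]
  note cs = cos_sin_cont
  note omc = K.om_cont
  have kne: "K.h t \<noteq> 0" for t using K.hpos[of t] by simp
  have Dkne: "D2 K.h t \<noteq> 0" for t using K.Dh_pos[of t] by simp
  have omne: "K.om t \<noteq> 0" for t using K.om_pos[of t] by simp
  define Bkk where "Bkk = Bf K.h K.h"
  have Bkk_pos: "Bkk > 0" unfolding Bkk_def by (rule K.Bhh_pos)
  define c where "c = Bf L.h K.h / Bkk"
  define a11 where "a11 = Ip (\<lambda>t. (cos t)^2 * K.om t)"
  define a12 where "a12 = Ip (\<lambda>t. (cos t * sin t) * K.om t)"
  define a22 where "a22 = Ip (\<lambda>t. (sin t)^2 * K.om t)"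
  define b1 where "b1 = Ip (\<lambda>t. (L.h t * cos t) * K.om t)"
  define b2 where "b2 = Ip (\<lambda>t. (L.h t * sin t) * K.om t)"
  have a22p: "a22 > 0" unfolding a22_def
    by (rule Ip_pos[of _ "pi/2"]) (use cs omc less_imp_le[OF K.om_pos] K.om_pos in \<open>auto intro!: continuous_intros\<close>)
  define lam where "lam = a12 / a22"
  have p1: "Ip (\<lambda>t. (cos t - lam * sin t)^2 * K.om t) > 0"
    by (rule Ip_pos[of _ pi]) (use cs omc less_imp_le[OF K.om_pos] K.om_pos in \<open>auto intro!: continuous_intros\<close>)
  have p2: "Ip (\<lambda>t. (cos t - lam * sin t)^2 * K.om t) = a11 + (- 2 * lam) * a12 + lam^2 * a22"
  proof -
    have "Ip (\<lambda>t. (cos t - lam * sin t)^2 * K.om t) = Ip (\<lambda>t. 1 * ((cos t)^2 * K.om t) + (- 2 * lam) * ((cos t * sin t) * K.om t) + lam^2 * ((sin t)^2 * K.om t))"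
      by (rule arg_cong[where f=Ip], rule ext) (simp add: power2_eq_square algebra_simps)
    also have "\<dots> = a11 + (- 2 * lam) * a12 + lam^2 * a22"
      unfolding a11_def a12_def a22_def by (subst Ip_lin3) (use cs omc in \<open>auto intro!: continuous_intros\<close>)
    finally show ?thesis .
  qed
  define dt where "dt = a11 * a22 - a12^2"
  have dtp: "dt > 0"
  proof -
    have "0 < a11 + (- 2 * lam) * a12 + lam^2 * a22" using p1 p2 by simp
    also have "\<dots> = dt / a22" using a22p by (simp add: lam_def dt_def field_simps power2_eq_square)
    finally show ?thesis using a22p by (simp add: zero_less_divide_iff)
  qed
  define al where "al = (b1 * a22 - b2 * a12) / dt"
  define be where "be = (a11 * b2 - a12 * b1) / dt"
  have eq1: "al * a11 + be * a12 = b1" and eq2: "al * a12 + be * a22 = b2"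
    unfolding al_def be_def using cramer[OF dt_def] dtp by auto
  define m where "m t = al * cos t + be * sin t" for t
  define m1 where "m1 t = - al * sin t + be * cos t" for t
  define m2 where "m2 t = - al * cos t - be * sin t" for t
  have mC: "C2w m m1 m2"
    unfolding C2w_def m_def[abs_def] m1_def[abs_def] m2_def[abs_def]
    by (auto intro!: derivative_eq_intros continuous_intros)
  note mc = C2w_contD[OF mC]
  define g where "g t = L.h t - c * K.h t - m t" for t
  have gC: "C2w g (\<lambda>t. L.h1 t - c * K.h1 t - m1 t) (\<lambda>t. L.h2 t - c * K.h2 t - m2 t)"
    unfolding g_def[abs_def] by (rule C2w_diff[OF C2w_diff[OF lC C2w_cmult[OF kC]] mC])
  note gc = C2w_contD[OF gC]
  have Dm: "D2 m t = 0" for t using C2w_D2[OF mC, of t] by (simp add: m_def m2_def)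
  have Dg: "D2 g t = D2 L.h t - c * D2 K.h t" for t
    using C2w_D2[OF gC, of t] K.Dh[of t] L.Dh[of t] by (simp add: g_def m_def m2_def algebra_simps)
  have Bmk: "Bf m K.h = 0" using Bf_sym[OF mC kC] by (simp add: Bf_def Dm)
  have Bcos: "Ip (\<lambda>t. cos t * D2 K.h t) = 0"
    using Bf_sym[OF C2w_cos kC] C2w_D2[OF C2w_cos] by (simp add: Bf_def)
  have Bsin: "Ip (\<lambda>t. sin t * D2 K.h t) = 0"
    using Bf_sym[OF C2w_sin kC] C2w_D2[OF C2w_sin] by (simp add: Bf_def)
  have Bgk: "Bf g K.h = 0"
  proof -
    have "Bf g K.h = Ip (\<lambda>t. L.h t * D2 K.h t - c * (K.h t * D2 K.h t) - 1 * (m t * D2 K.h t))"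
      unfolding Bf_def by (simp add: g_def algebra_simps)
    also have "\<dots> = Bf L.h K.h - c * Bkk - 1 * Bf m K.h"
      unfolding Bf_def Bkk_def by (rule Ip_lin3m) (use kc lc mc in \<open>auto intro!: continuous_intros\<close>)
    finally show ?thesis using Bmk Bkk_pos by (simp add: c_def)
  qed
  have gcos: "Ip (\<lambda>t. g t * cos t * K.om t) = 0"
  proof -
    have "Ip (\<lambda>t. g t * cos t * K.om t) = Ip (\<lambda>t. (L.h t * cos t) * K.om t - c * (cos t * D2 K.h t)
        - al * ((cos t)^2 * K.om t) - be * ((cos t * sin t) * K.om t))"
      by (rule arg_cong[where f=Ip], rule ext)
        (simp add: g_def m_def algebra_simps power2_eq_square K.h_om[symmetric])
    also have "\<dots> = b1 - c * Ip (\<lambda>t. cos t * D2 K.h t) - al * a11 - be * a12"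
      unfolding b1_def a11_def a12_def
      by (rule Ip_lin4) (use kc lc cs omc in \<open>auto intro!: continuous_intros\<close>)
    finally show ?thesis using eq1 Bcos by simp
  qed
  have gsin: "Ip (\<lambda>t. g t * sin t * K.om t) = 0"
  proof -
    have "Ip (\<lambda>t. g t * sin t * K.om t) = Ip (\<lambda>t. (L.h t * sin t) * K.om t - c * (sin t * D2 K.h t)
        - al * ((cos t * sin t) * K.om t) - be * ((sin t)^2 * K.om t))"
      by (rule arg_cong[where f=Ip], rule ext)
        (simp add: g_def m_def algebra_simps power2_eq_square K.h_om[symmetric])
    also have "\<dots> = b2 - c * Ip (\<lambda>t. sin t * D2 K.h t) - al * a12 - be * a22"
      unfolding b2_def a12_def a22_def
      by (rule Ip_lin4) (use kc lc cs omc in \<open>auto intro!: continuous_intros\<close>)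
    finally show ?thesis using eq2 Bsin by simp
  qed
  define y where "y t = g t * (1 / K.h t)" for t
  have yC': "C2w y (\<lambda>t. (L.h1 t - c * K.h1 t - m1 t) * (1 / K.h t) + g t * (- K.h1 t / (K.h t)^2))
     (\<lambda>t. (L.h2 t - c * K.h2 t - m2 t) * (1 / K.h t) + 2 * (L.h1 t - c * K.h1 t - m1 t) * (- K.h1 t / (K.h t)^2)
        + g t * ((2 * (K.h1 t)^2 - K.h t * K.h2 t) / (K.h t)^3))"
    unfolding y_def[abs_def] by (rule C2w_mult[OF gC C2w_inv[OF kC kne]])
  have yC: "C2_circle y" by (rule C2w_C2[OF yC'])
  have ykt: "y t * K.h t = g t" for t by (simp add: y_def kne)
  have yk: "(\<lambda>t. y t * K.h t) = g" by (rule ext) (simp add: y_def kne)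
  have y_dV: "dV_integral K y = 0" using K.dV_lin[of y] yk Bgk by simp
  have y_ell: "dV_integral K (\<lambda>t. y t * ell K v t) = 0" for v
  proof -
    have "dV_integral K (\<lambda>t. y t * ell K v t) = Ip (\<lambda>t. (v$1/2) * (g t * cos t * K.om t) + (v$2/2) * (g t * sin t * K.om t))"
      unfolding dV_integral_def ell_def
      by (rule arg_cong[where f=Ip], rule ext)
        (simp add: y_def inner_commute[of "dir _"] inner_dir K.om_def kne field_simps)
    also have "\<dots> = (v$1/2) * Ip (\<lambda>t. g t * cos t * K.om t) + (v$2/2) * Ip (\<lambda>t. g t * sin t * K.om t)"
      using gc cs omc by (subst Ip_add) (auto intro!: continuous_intros)
    finally show ?thesis using gcos gsin by simp
  qed
  define N where "N = - Bf g g"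
  have N0: "N \<ge> 0" using minkowski[OF kC gC K.Ip_h_pos K.Bhh_nonneg Bgk] by (simp add: N_def)
  define a where "a = Ip (\<lambda>t. (g t)^2 * K.om t)"
  define P where "P = Ip (\<lambda>t. (D2 g t)^2 / K.om t)"
  have a0: "a \<ge> 0" unfolding a_def
    by (rule integral_nonneg) (use gc omc less_imp_le[OF K.om_pos] in \<open>auto intro!: int_cont continuous_intros mult_nonneg_nonneg\<close>)
  have P0: "P \<ge> 0" unfolding P_def
    by (rule integral_nonneg) (use gc omc omne K.om_pos in \<open>auto intro!: int_cont continuous_intros divide_nonneg_pos\<close>)
  have CS: "N^2 \<le> a * P"
    using CSw[OF gc(1) gc(4) omc K.om_pos] by (simp add: N_def a_def P_def Bf_def)
  have LHSint: "bd_integral L (\<lambda>t. (1 / rel_curv L K t) * supp K t) = c^2 * Bkk + P"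
  proof -
    have "bd_integral L (\<lambda>t. (1 / rel_curv L K t) * supp K t)
        = Ip (\<lambda>t. c^2 * (K.h t * D2 K.h t) + (2 * c) * (K.h t * D2 g t) + 1 * ((D2 g t)^2 / K.om t))"
      unfolding bd_integral_def rel_curv_def curv_def
      by (rule arg_cong[where f=Ip], rule ext)
        (simp add: Dg K.om_def kne Dkne L.Dh_pos less_imp_neq[symmetric] field_simps power2_eq_square)
    also have "\<dots> = c^2 * Bkk + (2 * c) * Bf K.h g + 1 * P"
      unfolding Bkk_def Bf_def P_def
      by (rule Ip_lin3) (use kc gc omc omne in \<open>auto intro!: continuous_intros\<close>)
    also have "Bf K.h g = 0" using Bf_sym[OF kC gC] Bgk by simp
    finally show ?thesis by simp
  qed
  have Blk: "Bf L.h K.h = c * Bkk" using Bkk_pos by (simp add: c_def)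
  have Bll: "Bf L.h L.h = c^2 * Bkk + Bf g g"
  proof -
    have "Bf L.h L.h = Ip (\<lambda>t. c * (L.h t * D2 K.h t) + 1 * (L.h t * D2 g t))"
      unfolding Bf_def by (rule arg_cong[where f=Ip], rule ext) (simp add: Dg algebra_simps)
    also have "\<dots> = c * Bf L.h K.h + Bf L.h g"
      unfolding Bf_def using kc lc gc by (subst Ip_add) (auto intro!: continuous_intros)
    also have "Bf L.h g = Bf g L.h" by (rule Bf_sym[OF lC gC])
    also have "Bf g L.h = Ip (\<lambda>t. c * (g t * D2 K.h t) + 1 * (g t * D2 g t))"
      unfolding Bf_def by (rule arg_cong[where f=Ip], rule ext) (simp add: Dg algebra_simps)
    also have "\<dots> = c * Bf g K.h + Bf g g"
      unfolding Bf_def using kc gc by (subst Ip_add) (auto intro!: continuous_intros)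
    finally show ?thesis using Bgk Blk by (simp add: power2_eq_square)
  qed
  have aK: "area K = Bkk / 2" using K.area_formula by (simp add: Bkk_def)
  have aL: "area L = (c^2 * Bkk + Bf g g) / 2" using L.area_formula Bll by simp
  have mixed: "mixed_area K L = c * Bkk / 2"
  proof -
    interpret M: cb "msum K L" by (rule cb_msum[OF cK cL])
    have s: "supp (msum K L) = (\<lambda>t. 1 * K.h t + 1 * L.h t)" using supp_msum[OF cK cL] by auto
    have FC: "C2w (\<lambda>t. 1 * K.h t + 1 * L.h t) (\<lambda>t. 1 * K.h1 t + 1 * L.h1 t) (\<lambda>t. 1 * K.h2 t + 1 * L.h2 t)"
      by (intro C2w_add C2w_cmult kC lC)
    have "Bf (supp (msum K L)) (supp (msum K L)) = 1 * Bf K.h (\<lambda>t. 1 * K.h t + 1 * L.h t) + 1 * Bf L.h (\<lambda>t. 1 * K.h t + 1 * L.h t)"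
      unfolding s by (rule Bf_lin_left[OF kC lC FC])
    also have "\<dots> = Bkk + Bf K.h L.h + (Bf L.h K.h + Bf L.h L.h)"
      using Bf_lin_right[OF kC lC kC, of 1 1] Bf_lin_right[OF kC lC lC, of 1 1] by (simp add: Bkk_def)
    also have "Bf K.h L.h = Bf L.h K.h" by (rule Bf_sym[OF kC lC])
    finally have "area (msum K L) = (Bkk + 2 * Bf L.h K.h + Bf L.h L.h) / 2"
      using M.area_formula by simp
    then show ?thesis unfolding mixed_msum using aK L.area_formula Blk by simp
  qed
  have bracket: "(mixed_area K L)^2 / area K - area L = N / 2"
    unfolding mixed aK aL N_def using Bkk_pos by (simp add: field_simps power2_eq_square)
  have lhs: "(1/2) * bd_integral L (\<lambda>t. (1 / rel_curv L K t) * supp K t) - area L = (P + N) / 2"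
    unfolding LHSint aL N_def by (simp add: field_simps)
  show ?thesis
  proof (cases "N = 0")
    case True
    then show ?thesis unfolding bracket lhs using P0 by simp
  next
    case False
    then have Np: "N > 0" using N0 by simp
    have ap: "a > 0"
    proof (rule ccontr)
      assume "\<not> a > 0"
      then have "a = 0" using a0 by simp
      then have "N^2 \<le> 0" using CS by simp
      then show False using Np by simp
    qed
    have ynz: "\<exists>t. y t \<noteq> 0"
    proof (rule ccontr)
      assume "\<not> ?thesis"
      then have "g t = 0" for t using yk by (metis mult_zero_left)
      then have "a = 0" by (simp add: a_def)
      then show False using ap by simp
    qed
    have Qy: "dV_integral K (\<lambda>t. y t * (- L_op K y t)) = (a + N) / 2"
      using K.Qform(1)[OF yC'] yk by (simp add: a_def N_def ykt)
    have Ay: "dV_integral K (\<lambda>t. (y t)^2) = a / 2"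
      using K.Qform(2)[OF yC'] yk by (simp add: a_def ykt)
    have mem: "(a + N) / a \<in> { dV_integral K (\<lambda>t. z t * (- L_op K z t)) / dV_integral K (\<lambda>t. (z t)^2)
      | z. C2_circle z \<and> (\<exists>t. z t \<noteq> 0) \<and> dV_integral K z = 0
           \<and> (\<forall>v. dV_integral K (\<lambda>t. z t * ell K v t) = 0) }"
    proof -
      have "(a + N) / a = dV_integral K (\<lambda>t. y t * (- L_op K y t)) / dV_integral K (\<lambda>t. (y t)^2)"
        unfolding Qy Ay using ap by (simp add: field_simps)
      then show ?thesis using yC ynz y_dV y_ell by blast
    qed
    have lam2: "lambda2 K \<le> (a + N) / a"
      unfolding lambda2_def by (rule cInf_lower[OF mem K.lambda2_bdd])
    have "lambda2 K * (N / 2) \<le> (a + N) / a * (N / 2)" using lam2 Np by (intro mult_right_mono) auto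
    also have "\<dots> = (N + N^2 / a) / 2" using ap by (simp add: field_simps power2_eq_square)
    also have "N^2 / a \<le> P" using CS ap by (simp add: field_simps mult.commute)
    then have "N + N^2 / a \<le> P + N" by linarith
    then have "(N + N^2 / a) / 2 \<le> (P + N) / 2" by (rule divide_right_mono) simp
    finally show ?thesis unfolding bracket lhs .
  qed
qed

theorem theorem5p6:
  assumes "Kplus2 K" and "Kplus2 L"
  shows "(1/2) * bd_integral L (\<lambda>t. (1 / rel_curv L K t) * supp K t) - area L
           \<ge> lambda2 K * ((mixed_area K L)^2 / area K - area L)
         \<and> (1/2) * bd_integral L (\<lambda>t. 1 / curv L t) - area L
           \<ge> 4 * ((perimeter L)^2 / (4*pi) - area L)"
proof -
  have cK: "cb K" using assms(1) by (simp add: cb_def Kplus2_def)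
  have cL: "cb L" using assms(2) by (simp add: cb_def Kplus2_def)
  show ?thesis using first_ineq[OF cK cL] cb.second_ineq[OF cL] by simp
qed

end
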